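(* Let $0<m<M$, let $A\in\mathcal{B}(\mathcal{H})$ satisfy $mI\le A\le MI$, and let $\varphi:\mathcal{B}(\mathcal{H})\to\mathcal{B}(\mathcal{K})$ be a positive linear map with $\varphi(I)=I$. Then for $t<0$, \begin{align*} \frac{1}{K(m,M,t)}\varphi(A^t) &\le \frac{1}{K(m,M,t)}\varphi\left(\left(M^{A-m}m^{M-A}\right)^{\frac{t}{M-m}}\right)\\ &\le \varphi(A)^t\\ &\le \left(M^{\varphi(A)-m}m^{M-\varphi(A)}\right)^{\frac{t}{M-m}}\\ &\le K(m,M,t)\,\varphi(A^t), \end{align*} where $$K(m,M,t)=\frac{mM^{t}-Mm^{t}}{(t-1)(M-m)}\left(\frac{t-1}{t}\,\frac{M^t-m^t}{mM^t-Mm^t}\right)^{t}.$$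
   Context: $\mathcal{H},\mathcal{K}$ are complex Hilbert spaces, $\mathcal{B}(\mathcal{H})$ the bounded operators on $\mathcal{H}$, and $X\le Y$ means $Y-X$ is positive semidefinite. Operator functions are defined by continuous functional calculus; for self-adjoint $X$ with spectrum in $[m,M]$, $\left(M^{X-m}m^{M-X}\right)^{\frac{t}{M-m}}$ denotes $g(X)$ with $g(x)=\left(M^{x-m}m^{M-x}\right)^{\frac{t}{M-m}}$. *)

theory Defs
  imports "HOL-Analysis.Analysis" "HOL-Computational_Algebra.Polynomial"
begin

class complex_hilbert = banach +
  fixes scaleC :: "complex \<Rightarrow> 'a \<Rightarrow> 'a"
    and cinner :: "'a \<Rightarrow> 'a \<Rightarrow> complex"
  assumes scaleC_of_real: "scaleC (complex_of_real r) x = scaleR r x"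
    and scaleC_add_right: "scaleC a (x + y) = scaleC a x + scaleC a y"
    and scaleC_add_left: "scaleC (a + b) x = scaleC a x + scaleC b x"
    and scaleC_scaleC: "scaleC a (scaleC b x) = scaleC (a * b) x"
    and scaleC_one: "scaleC 1 x = x"
    and cinner_add_left: "cinner (x + y) z = cinner x z + cinner y z"
    and cinner_scaleC_left: "cinner (scaleC a x) y = cnj a * cinner x y"
    and cinner_commute: "cinner x y = cnj (cinner y x)"
    and norm_cinner: "norm x = sqrt (Re (cinner x x))"

text \<open>B(H): the bounded complex-linear operators on H.\<close>
definition bops :: "('a::complex_hilbert \<Rightarrow>\<^sub>L 'a) set" where
  "bops = {X. \<forall>c x. blinfun_apply X (scaleC c x) = scaleC c (blinfun_apply X x)}"

definition op_scaleC :: "complex \<Rightarrow> ('a::complex_hilbert \<Rightarrow>\<^sub>L 'a) \<Rightarrow> ('a \<Rightarrow>\<^sub>L 'a)" where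
  "op_scaleC c X = Blinfun (\<lambda>x. scaleC c (blinfun_apply X x))"

definition self_adjoint :: "('a::complex_hilbert \<Rightarrow>\<^sub>L 'a) \<Rightarrow> bool" where
  "self_adjoint X \<longleftrightarrow> (\<forall>x y. cinner (blinfun_apply X x) y = cinner x (blinfun_apply X y))"

definition op_pos :: "('a::complex_hilbert \<Rightarrow>\<^sub>L 'a) \<Rightarrow> bool" where
  "op_pos X \<longleftrightarrow> (\<forall>x. Im (cinner x (blinfun_apply X x)) = 0 \<and> Re (cinner x (blinfun_apply X x)) \<ge> 0)"

definition op_le :: "('a::complex_hilbert \<Rightarrow>\<^sub>L 'a) \<Rightarrow> ('a \<Rightarrow>\<^sub>L 'a) \<Rightarrow> bool" where
  "op_le X Y \<longleftrightarrow> op_pos (Y - X)"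

definition op_pow :: "('a::complex_hilbert \<Rightarrow>\<^sub>L 'a) \<Rightarrow> nat \<Rightarrow> ('a \<Rightarrow>\<^sub>L 'a)" where
  "op_pow X n = ((\<lambda>Y. X o\<^sub>L Y) ^^ n) id_blinfun"

definition op_poly :: "real poly \<Rightarrow> ('a::complex_hilbert \<Rightarrow>\<^sub>L 'a) \<Rightarrow> ('a \<Rightarrow>\<^sub>L 'a)" where
  "op_poly p X = (\<Sum>i\<le>degree p. coeff p i *\<^sub>R op_pow X i)"

text \<open>Real spectrum of an operator (for self-adjoint operators the spectrum is real).\<close>
definition real_spectrum :: "('a::complex_hilbert \<Rightarrow>\<^sub>L 'a) \<Rightarrow> real set" where
  "real_spectrum X = {r. \<not> bij (blinfun_apply (X - r *\<^sub>R id_blinfun))}"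

text \<open>Continuous functional calculus for self-adjoint operators:
  \<open>g(X) = lim p_n(X)\<close> for any sequence of real polynomials \<open>p_n\<close> converging
  uniformly to g on the spectrum of X (Weierstrass).\<close>
definition opfun :: "(real \<Rightarrow> real) \<Rightarrow> ('a::complex_hilbert \<Rightarrow>\<^sub>L 'a) \<Rightarrow> ('a \<Rightarrow>\<^sub>L 'a)" where
  "opfun g X = (THE B. \<forall>p :: nat \<Rightarrow> real poly.
       uniform_limit (real_spectrum X) (\<lambda>n x. poly (p n) x) g sequentially \<longrightarrow>
       (\<lambda>n. op_poly (p n) X) \<longlonglongrightarrow> B)"

definition positive_unital_linear_map ::
  "(('a::complex_hilbert \<Rightarrow>\<^sub>L 'a) \<Rightarrow> ('b::complex_hilbert \<Rightarrow>\<^sub>L 'b)) \<Rightarrow> bool" where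
  "positive_unital_linear_map \<phi> \<longleftrightarrow>
     (\<forall>X\<in>bops. \<phi> X \<in> bops) \<and>
     (\<forall>X\<in>bops. \<forall>Y\<in>bops. \<phi> (X + Y) = \<phi> X + \<phi> Y) \<and>
     (\<forall>X\<in>bops. \<forall>c. \<phi> (op_scaleC c X) = op_scaleC c (\<phi> X)) \<and>
     (\<forall>X\<in>bops. op_pos X \<longrightarrow> op_pos (\<phi> X)) \<and>
     \<phi> id_blinfun = id_blinfun"

definition Kconst :: "real \<Rightarrow> real \<Rightarrow> real \<Rightarrow> real" where
  "Kconst m M t = (m * M powr t - M * m powr t) / ((t - 1) * (M - m)) *
     ((t - 1) / t * ((M powr t - m powr t) / (m * M powr t - M * m powr t))) powr t"

end

theory Submission
  imports Defs "HOL-Computational_Algebra.Fundamental_Theorem_Algebra"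
begin

lemma cinner_add_right: "cinner x (y + z) = cinner x y + cinner x z"
  by (metis cinner_commute cinner_add_left complex_cnj_add)

lemma cinner_scaleC_right: "cinner x (scaleC a y) = a * cinner x y"
  by (metis cinner_commute cinner_scaleC_left complex_cnj_cnj complex_cnj_mult)

lemma cinner_zero_left [simp]: "cinner 0 y = 0"
  using cinner_add_left[of 0 0 y] by simp

lemma cinner_zero_right [simp]: "cinner x 0 = 0"
  using cinner_add_right[of x 0 0] by simp

lemma cinner_minus_left: "cinner (- x) y = - cinner x y"
  using cinner_add_left[of x "-x" y] by (metis add.commute eq_neg_iff_add_eq_0 add.right_inverse cinner_zero_left)

lemma cinner_minus_right: "cinner x (- y) = - cinner x y"
  using cinner_add_right[of x y "-y"] by (metis add.commute eq_neg_iff_add_eq_0 add.right_inverse cinner_zero_right)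

lemma cinner_diff_left: "cinner (x - y) z = cinner x z - cinner y z"
  using cinner_add_left[of x "-y" z] by (simp add: cinner_minus_left)

lemma cinner_diff_right: "cinner x (y - z) = cinner x y - cinner x z"
  using cinner_add_right[of x y "-z"] by (simp add: cinner_minus_right)

lemma cinner_scaleR_left: "cinner (r *\<^sub>R x) y = of_real r * cinner x y"
  by (metis cinner_scaleC_left complex_cnj_complex_of_real scaleC_of_real)

lemma cinner_scaleR_right: "cinner x (r *\<^sub>R y) = of_real r * cinner x y"
  by (metis cinner_scaleC_right scaleC_of_real)

lemma Im_cinner_self [simp]: "Im (cinner x x) = 0"
  by (metis cinner_commute Reals_cnj_iff complex_is_Real_iff)

lemma Re_cinner_self: "Re (cinner x x) = (norm x)^2"
proof -
  have "Re (cinner x x) \<ge> 0" by (metis norm_cinner norm_ge_zero real_sqrt_ge_0_iff)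
  thus ?thesis using norm_cinner[of x] by simp
qed

lemma cinner_self: "cinner x x = of_real ((norm x)^2)"
  by (simp add: complex_eq_iff Re_cinner_self)

lemma norm_add_sq: "(norm (x + y))^2 = (norm x)^2 + (norm y)^2 + 2 * Re (cinner x y)"
proof -
  have "cinner (x+y) (x+y) = cinner x x + cinner y y + (cinner x y + cinner y x)"
    by (simp add: cinner_add_left cinner_add_right)
  moreover have "Re (cinner y x) = Re (cinner x y)"
    using cinner_commute[of y x] by simp  
  ultimately show ?thesis by (simp flip: Re_cinner_self)
qed

lemma norm_diff_sq: "(norm (x - y))^2 = (norm x)^2 + (norm y)^2 - 2 * Re (cinner x y)"
  using norm_add_sq[of x "-y"] by (simp add: cinner_minus_right)

lemma Re_cinner_le: "Re (cinner x y) \<le> norm x * norm y"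
proof (cases "y = 0")
  case True then show ?thesis by simp
next
  case False
  define s where "s = Re (cinner x y) / (norm y)^2"
  have ny: "norm y > 0" using False by simp
  have "0 \<le> (norm (x - s *\<^sub>R y))^2" by simp
  also have "\<dots> = (norm x)^2 + s^2 * (norm y)^2 - 2 * s * Re (cinner x y)"
    by (simp add: norm_diff_sq cinner_scaleR_right power_mult_distrib abs_mult)
  also have "\<dots> = (norm x)^2 - (Re (cinner x y))^2 / (norm y)^2"
    using ny by (simp add: s_def power2_eq_square field_simps)
  finally have "(Re (cinner x y))^2 \<le> (norm x * norm y)^2"
    using ny by (simp add: field_simps power_mult_distrib)
  thus ?thesis using real_le_rsqrt by (metis abs_le_square_iff abs_of_nonneg mult_nonneg_nonneg norm_ge_zero abs_ge_self order_trans)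
qed

lemma abs_Re_cinner_le: "\<bar>Re (cinner x y)\<bar> \<le> norm x * norm y"
  using Re_cinner_le[of x y] Re_cinner_le[of x "-y"] by (simp add: cinner_minus_right)

lemma norm_scaleC_ii: "norm (scaleC \<i> y) = norm y"
  by (simp add: norm_cinner cinner_scaleC_left cinner_scaleC_right)

lemma Im_cinner_eq: "Im (cinner x y) = - Re (cinner x (scaleC \<i> y))"
  by (simp add: cinner_scaleC_right)

lemma abs_Im_cinner_le: "\<bar>Im (cinner x y)\<bar> \<le> norm x * norm y"
  using abs_Re_cinner_le[of x "scaleC \<i> y"] by (simp add: Im_cinner_eq norm_scaleC_ii)

lemma bounded_bilinear_Re_cinner: "bounded_bilinear (\<lambda>x y. Re (cinner x y))"
  apply (rule bounded_bilinear.intro)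
  apply (simp_all add: cinner_add_left cinner_add_right cinner_scaleR_left cinner_scaleR_right)
  apply (rule exI[of _ 1]) using abs_Re_cinner_le by (auto simp: abs_le_iff)

lemma bounded_bilinear_Im_cinner: "bounded_bilinear (\<lambda>x y. Im (cinner x y))"
  apply (rule bounded_bilinear.intro)
  apply (simp_all add: cinner_add_left cinner_add_right cinner_scaleR_left cinner_scaleR_right)
  apply (rule exI[of _ 1]) using abs_Im_cinner_le by (auto simp: abs_le_iff)

lemmas app_simps = plus_blinfun.rep_eq minus_blinfun.rep_eq scaleR_blinfun.rep_eq
  uminus_blinfun.rep_eq zero_blinfun.rep_eq blinfun.add_right blinfun.diff_right
  blinfun.scaleR_right blinfun.minus_right

lemma op_pos_iff: "op_pos X \<longleftrightarrow> (\<forall>x. Im (cinner x (X x)) = 0 \<and> Re (cinner x (X x)) \<ge> 0)"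
  by (simp add: op_pos_def)

lemma op_le_iff: "op_le X Y \<longleftrightarrow> (\<forall>x. Im (cinner x (Y x)) = Im (cinner x (X x)) \<and>
    Re (cinner x (X x)) \<le> Re (cinner x (Y x)))"
  by (simp add: op_le_def op_pos_def app_simps cinner_diff_right)

lemma op_le_refl: "op_le X X"
  by (simp add: op_le_iff)

lemma op_le_trans: "op_le X Y \<Longrightarrow> op_le Y Z \<Longrightarrow> op_le X Z"
  unfolding op_le_iff by (metis order_trans)

lemma op_le_scaleR: "op_le X Y \<Longrightarrow> 0 \<le> c \<Longrightarrow> op_le (c *\<^sub>R X) (c *\<^sub>R Y)"
  unfolding op_le_iff by (simp add: app_simps cinner_scaleR_right mult_left_mono)

lemma op_le_add: "op_le X Y \<Longrightarrow> op_le X' Y' \<Longrightarrow> op_le (X + X') (Y + Y')"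
  unfolding op_le_iff by (simp add: app_simps cinner_add_right add_mono)

lemma op_le_diff_iff: "op_le X Y \<longleftrightarrow> op_pos (Y - X)"
  by (simp add: op_le_def)

lemma self_adjointD: "self_adjoint X \<Longrightarrow> cinner (X x) y = cinner x (X y)"
  by (simp add: self_adjoint_def)

lemma self_adjoint_Im: "self_adjoint X \<Longrightarrow> Im (cinner x (X x)) = 0"
  by (metis self_adjointD cinner_commute Reals_cnj_iff complex_is_Real_iff)

lemma self_adjoint_Re_sym: assumes "self_adjoint X" shows "Re (cinner x (X y)) = Re (cinner y (X x))"
proof -
  have "cinner x (X y) = cnj (cinner y (X x))" using self_adjointD[OF assms, of x y] cinner_commute by metis
  thus ?thesis by simp
qed

lemma scaleC_ii_real: "scaleC \<i> (r *\<^sub>R x) = r *\<^sub>R scaleC \<i> x"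
  by (metis scaleC_of_real scaleC_scaleC mult.commute)

lemma bops_sa: assumes "X \<in> bops" "\<And>x. Im (cinner x (X x)) = 0" shows "self_adjoint X"
proof -
  have lin: "X (scaleC c x) = scaleC c (X x)" for c x using assms(1) by (simp add: bops_def)
  have main: "cinner x (X y) = cnj (cinner y (X x))" for x y
  proof -
    have "Im (cinner (x+y) (X (x+y))) = 0" by (rule assms(2))
    hence 1: "Im (cinner x (X y)) + Im (cinner y (X x)) = 0"
      using assms(2)[of x] assms(2)[of y]
      by (simp add: blinfun.add_right cinner_add_left cinner_add_right)
    have "Im (cinner (x + scaleC \<i> y) (X (x + scaleC \<i> y))) = 0" by (rule assms(2))
    hence 2: "Re (cinner x (X y)) - Re (cinner y (X x)) = 0"
      using assms(2)[of x] assms(2)[of "scaleC \<i> y"]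
      by (simp add: blinfun.add_right cinner_add_left cinner_add_right lin cinner_scaleC_left
          cinner_scaleC_right)
    show ?thesis using 1 2 by (simp add: complex_eq_iff)
  qed
  show ?thesis unfolding self_adjoint_def
    by (metis main cinner_commute)
qed

lemma op_pos_sa: "X \<in> bops \<Longrightarrow> op_pos X \<Longrightarrow> self_adjoint X"
  by (rule bops_sa) (auto simp: op_pos_def)

lemma bops_add: "X \<in> bops \<Longrightarrow> Y \<in> bops \<Longrightarrow> X + Y \<in> bops"
  by (simp add: bops_def app_simps scaleC_add_right)

lemma scaleC_zero [simp]: "scaleC c 0 = 0"
proof -
  have "scaleC c 0 = scaleC c 0 + scaleC c 0" by (metis add_0 scaleC_add_right)
  thus ?thesis by simp
qed

lemma scaleC_minus: "scaleC c (- x) = - scaleC c x"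
proof -
  have "scaleC c (- x) + scaleC c x = 0" by (simp flip: scaleC_add_right)
  thus ?thesis by (simp add: eq_neg_iff_add_eq_0)
qed

lemma scaleC_diff: "scaleC c (x - y) = scaleC c x - scaleC c y"
  by (metis diff_conv_add_uminus scaleC_add_right scaleC_minus)

lemma scaleC_scaleR: "scaleC c (r *\<^sub>R x) = r *\<^sub>R scaleC c x"
  by (metis scaleC_of_real scaleC_scaleC mult.commute)

lemma bops_diff: "X \<in> bops \<Longrightarrow> Y \<in> bops \<Longrightarrow> X - Y \<in> bops"
  by (simp add: bops_def app_simps scaleC_diff)

lemma bops_scaleR: "X \<in> bops \<Longrightarrow> r *\<^sub>R X \<in> bops"
  by (simp add: bops_def app_simps scaleC_scaleR)

lemma bops_id: "id_blinfun \<in> bops"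
  by (simp add: bops_def)

lemma bops_compose: "X \<in> bops \<Longrightarrow> Y \<in> bops \<Longrightarrow> X o\<^sub>L Y \<in> bops"
  by (simp add: bops_def)

lemma bops_zero: "0 \<in> bops"
  by (simp add: bops_def app_simps)

lemma sa_add: "self_adjoint X \<Longrightarrow> self_adjoint Y \<Longrightarrow> self_adjoint (X + Y)"
  by (simp add: self_adjoint_def app_simps cinner_add_left cinner_add_right)

lemma sa_diff: "self_adjoint X \<Longrightarrow> self_adjoint Y \<Longrightarrow> self_adjoint (X - Y)"
  by (simp add: self_adjoint_def app_simps cinner_diff_left cinner_diff_right)

lemma sa_scaleR: "self_adjoint X \<Longrightarrow> self_adjoint (r *\<^sub>R X)"
  by (simp add: self_adjoint_def app_simps cinner_scaleR_left cinner_scaleR_right)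

lemma sa_id: "self_adjoint id_blinfun"
  by (simp add: self_adjoint_def)

lemma sa_zero: "self_adjoint 0"
  by (simp add: self_adjoint_def app_simps)

lemma sa_norm_le:
  assumes sa: "self_adjoint T" and c: "0 \<le> c"
    and b: "\<And>x. \<bar>Re (cinner x (T x))\<bar> \<le> c * (norm x)^2"
  shows "norm T \<le> c"
proof (rule norm_blinfun_bound[OF c])
  fix x
  show "norm (T x) \<le> c * norm x"
  proof (cases "T x = 0")
    case True then show ?thesis using c by simp
  next
    case False
    define s where "s = norm x / norm (T x)"
    define y where "y = s *\<^sub>R T x"
    have nT: "norm (T x) > 0" using False by simp
    have s0: "s \<ge> 0" by (simp add: s_def)
    have ny: "norm y = norm x" using nT by (simp add: y_def s_def)
    have pol: "Re (cinner (x+y) (T (x+y))) - Re (cinner (x-y) (T (x-y))) = 4 * Re (cinner y (T x))"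
      using self_adjoint_Re_sym[OF sa, of x y]
      by (simp add: blinfun.add_right blinfun.diff_right cinner_add_left cinner_add_right
          cinner_diff_left cinner_diff_right)
    have "Re (cinner (x+y) (T (x+y))) - Re (cinner (x-y) (T (x-y))) \<le> c * (norm (x+y))^2 + c * (norm (x-y))^2"
      using b[of "x+y"] b[of "x-y"] by (simp add: abs_le_iff)
    also have "\<dots> = 2 * c * ((norm x)^2 + (norm y)^2)"
      by (simp add: norm_add_sq norm_diff_sq algebra_simps)
    finally have "4 * Re (cinner y (T x)) \<le> 4 * c * (norm x)^2" using pol ny by simp
    moreover have "Re (cinner y (T x)) = s * (norm (T x))^2"
      by (simp add: y_def cinner_scaleR_left Re_cinner_self)
    moreover have "s * (norm (T x))^2 = norm x * norm (T x)"
      using nT by (simp add: s_def power2_eq_square)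
    ultimately have "norm x * norm (T x) \<le> c * norm x * norm x"
      by (simp only: power2_eq_square mult.assoc)
    moreover have "norm x > 0" using False by (metis blinfun.zero_right zero_less_norm_iff)
    ultimately show ?thesis by (simp add: mult.commute)
  qed
qed

definition bdd_below_op :: "('a::complex_hilbert \<Rightarrow>\<^sub>L 'a) \<Rightarrow> bool" where
  "bdd_below_op Y \<longleftrightarrow> (\<exists>k>0. \<forall>x. k * norm x \<le> norm (Y x))"

lemma Re_quad_le: fixes Y :: "'a::complex_hilbert \<Rightarrow>\<^sub>L 'a" shows "Re (cinner x (Y x)) \<le> norm Y * (norm x)^2"
proof -
  have "Re (cinner x (Y x)) \<le> norm x * norm (Y x)" by (rule Re_cinner_le)
  also have "\<dots> \<le> norm x * (norm Y * norm x)" by (simp add: mult_left_mono norm_blinfun)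
  finally show ?thesis by (simp add: power2_eq_square mult_ac)
qed

lemma abs_Re_quad_le: fixes Y :: "'a::complex_hilbert \<Rightarrow>\<^sub>L 'a" shows "\<bar>Re (cinner x (Y x))\<bar> \<le> norm Y * (norm x)^2"
proof -
  have "\<bar>Re (cinner x (Y x))\<bar> \<le> norm x * norm (Y x)" by (rule abs_Re_cinner_le)
  also have "\<dots> \<le> norm x * (norm Y * norm x)" by (simp add: mult_left_mono norm_blinfun)
  finally show ?thesis by (simp add: power2_eq_square mult_ac)
qed

lemma coercive_bdd_below:
  fixes Y :: "'a::complex_hilbert \<Rightarrow>\<^sub>L 'a"
  assumes e: "0 < e" and q: "\<And>x. e * (norm x)^2 \<le> Re (cinner x (Y x))"
  shows "bdd_below_op Y"
  unfolding bdd_below_op_def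
proof (intro exI[of _ e] conjI allI e)
  fix x
  have "e * (norm x)^2 \<le> norm x * norm (Y x)" using q[of x] Re_cinner_le[of x "Y x"] by linarith
  thus "e * norm x \<le> norm (Y x)"
    by (cases "x = 0") (auto simp: power2_eq_square mult.assoc[symmetric])
qed

lemma bdd_below_inj: "bdd_below_op Y \<Longrightarrow> inj (blinfun_apply Y)"
proof (rule injI)
  fix x y assume b: "bdd_below_op Y" and eq: "Y x = Y y"
  then obtain k where k: "k > 0" "\<And>x. k * norm x \<le> norm (Y x)" unfolding bdd_below_op_def by blast
  have "k * norm (x - y) \<le> 0" using k(2)[of "x - y"] eq by (simp add: blinfun.diff_right)
  thus "x = y" using k(1) by (simp add: mult_le_0_iff)
qed

lemma coercive_bij:
  assumes sa: "self_adjoint Y" and e: "0 < e" and q: "\<And>x. e * (norm x)^2 \<le> Re (cinner x (Y x))"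
  shows "bij (blinfun_apply Y)"
proof (rule bijI)
  show "inj (blinfun_apply Y)" by (rule bdd_below_inj[OF coercive_bdd_below[OF e q]])
  define C where "C = norm Y + e"
  have C: "C > 0" "e \<le> C" using e norm_ge_zero[of Y] unfolding C_def by linarith+
  define L where "L = id_blinfun - (1/C) *\<^sub>R Y"
  define r where "r = 1 - e / C"
  have r: "0 \<le> r" "r < 1" using C e by (auto simp: r_def field_simps)
  have saL: "self_adjoint L" unfolding L_def by (intro sa_diff sa_id sa_scaleR sa)
  have "norm L \<le> r"
  proof (rule sa_norm_le[OF saL r(1)])
    fix x
    have eq: "Re (cinner x (L x)) = (norm x)^2 - Re (cinner x (Y x)) / C"
      by (simp add: L_def app_simps cinner_diff_right cinner_scaleR_right Re_cinner_self)
    have "Re (cinner x (Y x)) \<le> norm Y * (norm x)^2" by (rule Re_quad_le)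
    also have "\<dots> \<le> C * (norm x)^2" by (simp add: C_def e less_imp_le mult_right_mono)
    finally have 1: "Re (cinner x (Y x)) / C \<le> (norm x)^2" using C by (simp add: divide_le_eq mult.commute)
    have 2: "e * (norm x)^2 / C \<le> Re (cinner x (Y x)) / C" using q[of x] C by (simp add: divide_right_mono)
    show "\<bar>Re (cinner x (L x))\<bar> \<le> r * (norm x)^2"
      using 1 2 unfolding eq r_def by (simp add: algebra_simps abs_le_iff)
  qed
  show "surj (blinfun_apply Y)"
  proof (rule surjI)
    fix b
    define f where "f x = L x + (1/C) *\<^sub>R b" for x
    have "\<exists>!x. f x = x"
    proof (rule banach_fix_type[OF r])
      show "\<forall>x y. dist (f x) (f y) \<le> r * dist x y"
      proof (intro allI)
        fix x y
        have "dist (f x) (f y) = norm (L (x - y))" by (simp add: f_def dist_norm blinfun.diff_right)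
        also have "\<dots> \<le> norm L * norm (x - y)" by (rule norm_blinfun)
        also have "\<dots> \<le> r * dist x y" using \<open>norm L \<le> r\<close> by (simp add: dist_norm mult_right_mono)
        finally show "dist (f x) (f y) \<le> r * dist x y" .
      qed
    qed
    then obtain x where "f x = x" by blast
    hence "x - (1/C) *\<^sub>R Y x + (1/C) *\<^sub>R b = x" by (simp add: f_def L_def app_simps)
    hence "(1/C) *\<^sub>R Y x = (1/C) *\<^sub>R b" by (metis add_diff_cancel_left' diff_add_cancel diff_diff_eq2 add.commute)
    hence "Y x = b" using C by auto
    thus "Y (inv (blinfun_apply Y) b) = b" by (metis f_inv_into_f rangeI)
  qed
qed

text \<open>Hellinger--Toeplitz type statement: a bijective self-adjoint operator is bounded below.\<close>
lemma sa_bij_bdd_below: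
  assumes sa: "self_adjoint Y" and bj: "bij (blinfun_apply Y)"
  shows "bdd_below_op Y"
proof -
  define S where "S = inv (blinfun_apply Y)"
  have YS: "Y (S x) = x" for x using bj by (simp add: S_def bij_is_surj surj_f_inv_f)
  have SY: "S (Y x) = x" for x using bj by (simp add: S_def bij_is_inj)
  have Sadd: "S (x + y) = S x + S y" for x y by (metis SY YS blinfun.add_right)
  have Sdiff: "S (x - y) = S x - S y" for x y by (metis SY YS blinfun.diff_right)
  have Sscale: "S (c *\<^sub>R x) = c *\<^sub>R S x" for c x by (metis SY YS blinfun.scaleR_right)
  have Ssym: "cinner (S x) y = cinner x (S y)" for x y
    by (metis YS self_adjointD[OF sa])
  define F where "F k = {z. \<forall>x. norm x \<le> 1 \<longrightarrow> \<bar>Re (cinner (S x) z)\<bar> \<le> real k}" for k :: nat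
  have cont: "continuous_on UNIV (\<lambda>z. Re (cinner a z))" for a
    by (intro linear_continuous_on bounded_bilinear.bounded_linear_right[OF bounded_bilinear_Re_cinner])
  have closedF: "closed (F k)" for k
  proof -
    have "F k = (\<Inter>x\<in>{x. norm x \<le> 1}. {z. \<bar>Re (cinner (S x) z)\<bar> \<le> real k})"
      by (auto simp: F_def)
    moreover have "closed {z. \<bar>Re (cinner (S x) z)\<bar> \<le> real k}" for x
      by (intro closed_Collect_le continuous_intros cont)
    ultimately show ?thesis by auto
  qed
  have coverF: "(\<Union>k. F k) = UNIV"
  proof (safe)
    fix z
    obtain k :: nat where k: "norm (S z) \<le> real k" using real_arch_simple by blast
    have "z \<in> F k" unfolding F_def
    proof (safe)
      fix x :: 'a assume x: "norm x \<le> 1"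
      have "\<bar>Re (cinner (S x) z)\<bar> = \<bar>Re (cinner x (S z))\<bar>" by (simp add: Ssym)
      also have "\<dots> \<le> norm x * norm (S z)" by (rule abs_Re_cinner_le)
      also have "\<dots> \<le> 1 * real k" using x k by (intro mult_mono) auto
      finally show "\<bar>Re (cinner (S x) z)\<bar> \<le> real k" by simp
    qed
    thus "z \<in> (\<Union>k. F k)" by blast
  qed auto
  have "\<exists>k. interior (F k) \<noteq> {}"
  proof (rule ccontr)
    assume "\<not> ?thesis"
    hence "euclidean interior_of \<Union>(range F) = {}"
      by (intro Baire_category_alt) (auto simp: completely_metrizable_space_euclidean closedF
          closed_closedin[symmetric])
    thus False using coverF by simp
  qed
  then obtain k z0 where "z0 \<in> interior (F k)" by blast
  then obtain r where r: "r > 0" "ball z0 r \<subseteq> F k" by (meson mem_interior)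
  have z0: "z0 \<in> F k" using r by auto
  have bnd: "norm (S x) \<le> 4 * real k / r" if x: "norm x \<le> 1" for x
  proof (cases "S x = 0")
    case True then show ?thesis using r by simp
  next
    case False
    define w where "w = (r / 2 / norm (S x)) *\<^sub>R S x"
    have nw: "norm w = r / 2" using False r by (simp add: w_def)
    hence "z0 + w \<in> F k" using r by (intro subsetD[OF r(2)]) (simp add: dist_norm)
    hence 1: "\<bar>Re (cinner (S x) (z0 + w))\<bar> \<le> real k" using x by (simp add: F_def)
    have 2: "\<bar>Re (cinner (S x) z0)\<bar> \<le> real k" using z0 x by (simp add: F_def)
    have "Re (cinner (S x) w) = r / 2 * norm (S x)"
      using False by (simp add: w_def cinner_scaleR_right Re_cinner_self power2_eq_square)
    moreover have "Re (cinner (S x) (z0 + w)) = Re (cinner (S x) z0) + Re (cinner (S x) w)"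
      by (simp add: cinner_add_right)
    ultimately have "r / 2 * norm (S x) \<le> 2 * real k" using 1 2 by (simp add: abs_le_iff)
    thus ?thesis using r by (simp add: field_simps)
  qed
  define K where "K = 4 * real k / r + 1"
  have K: "K > 0" using r unfolding K_def by (simp add: add_nonneg_pos)
  have "norm (S x) \<le> K * norm x" for x
  proof (cases "x = 0")
    case True
    have "S 0 = 0" using Sscale[of 0 0] by simp
    thus ?thesis using True by simp
  next
    case False
    have "norm (S ((1 / norm x) *\<^sub>R x)) \<le> 4 * real k / r" using False by (intro bnd) simp
    hence "norm (S x) / norm x \<le> 4 * real k / r" using False by (simp add: Sscale)
    hence "norm (S x) \<le> 4 * real k / r * norm x" using False by (simp add: divide_le_eq)
    also have "\<dots> \<le> K * norm x" unfolding K_def by (intro mult_right_mono) auto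
    finally show ?thesis .
  qed
  hence "(1/K) * norm x \<le> norm (Y x)" for x
    using K by (metis SY mult.commute pos_divide_le_eq divide_inverse mult_1)
  thus ?thesis unfolding bdd_below_op_def using K by (intro exI[of _ "1/K"]) auto
qed

lemma op_pow_0 [simp]: "op_pow X 0 = id_blinfun"
  by (simp add: op_pow_def)

lemma op_pow_Suc: "op_pow X (Suc n) = X o\<^sub>L op_pow X n"
  by (simp add: op_pow_def)

lemma op_poly_sum:
  assumes "degree p \<le> n"
  shows "op_poly p X = (\<Sum>i\<le>n. coeff p i *\<^sub>R op_pow X i)"
proof -
  have "(\<Sum>i\<le>n. coeff p i *\<^sub>R op_pow X i) = (\<Sum>i\<le>degree p. coeff p i *\<^sub>R op_pow X i)"
  proof (rule sum.mono_neutral_right)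
    show "\<forall>i\<in>{..n} - {..degree p}. coeff p i *\<^sub>R op_pow X i = 0"
      by (auto simp: coeff_eq_0)
  qed (use assms in auto)
  thus ?thesis by (simp add: op_poly_def)
qed

lemma op_poly_add: "op_poly (p + q) X = op_poly p X + op_poly q X"
proof -
  define n where "n = max (degree p) (degree q)"
  have "degree (p + q) \<le> n" by (simp add: n_def degree_add_le)
  thus ?thesis
    by (simp add: op_poly_sum[of _ n] n_def scaleR_add_left sum.distrib)
qed

lemma op_poly_smult: "op_poly (smult a p) X = a *\<^sub>R op_poly p X"
proof -
  have "degree (smult a p) \<le> degree p" by simp
  thus ?thesis by (simp add: op_poly_sum[of _ "degree p"] scaleR_sum_right op_poly_def)
qed

lemma op_poly_minus: "op_poly (- p) X = - op_poly p X"
  using op_poly_smult[of "-1" p X] by simp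

lemma op_poly_diff: "op_poly (p - q) X = op_poly p X - op_poly q X"
  using op_poly_add[of p "-q" X] by (simp add: op_poly_minus)

lemma op_poly_const: "op_poly [:c:] X = c *\<^sub>R id_blinfun"
  by (simp add: op_poly_def)

lemma op_poly_zero [simp]: "op_poly 0 X = 0"
  by (simp add: op_poly_def)

lemma compose_sum_right: "A o\<^sub>L (\<Sum>i\<in>I. f i) = (\<Sum>i\<in>I. A o\<^sub>L f i)"
  by (rule blinfun_eqI) (simp add: blinfun.sum_left blinfun.sum_right)

lemma op_poly_pCons: "op_poly (pCons a p) X = a *\<^sub>R id_blinfun + (X o\<^sub>L op_poly p X)"
proof -
  define n where "n = degree p"
  have "degree (pCons a p) \<le> Suc n" by (simp add: n_def)
  hence "op_poly (pCons a p) X = (\<Sum>i\<le>Suc n. coeff (pCons a p) i *\<^sub>R op_pow X i)"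
    by (rule op_poly_sum)
  also have "\<dots> = a *\<^sub>R id_blinfun + (\<Sum>i\<le>n. coeff p i *\<^sub>R op_pow X (Suc i))"
    unfolding sum.atMost_Suc_shift by simp
  also have "(\<Sum>i\<le>n. coeff p i *\<^sub>R op_pow X (Suc i)) = X o\<^sub>L op_poly p X"
    by (rule blinfun_eqI) (simp add: n_def op_poly_def op_pow_Suc blinfun.sum_left
        blinfun.sum_right scaleR_blinfun.rep_eq blinfun.scaleR_right)
  finally show ?thesis .
qed

lemma compose_add_left: "(A + B) o\<^sub>L C = (A o\<^sub>L C) + (B o\<^sub>L C)"
  by (rule blinfun_eqI) (simp add: app_simps)

lemma compose_scaleR_left: "(a *\<^sub>R A) o\<^sub>L C = a *\<^sub>R (A o\<^sub>L C)"
  by (rule blinfun_eqI) (simp add: app_simps)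

lemma compose_assoc: "(A o\<^sub>L B) o\<^sub>L C = A o\<^sub>L (B o\<^sub>L C)"
  by (rule blinfun_eqI) simp

lemma compose_id_left: "id_blinfun o\<^sub>L C = C"
  by (rule blinfun_eqI) simp

lemma op_poly_mult: "op_poly (p * q) X = op_poly p X o\<^sub>L op_poly q X"
proof (induction p rule: pCons_induct)
  case 0 then show ?case by (simp add: blinfun_eqI app_simps)
next
  case (pCons a p)
  have "pCons a p * q = smult a q + pCons 0 (p * q)" by simp
  hence "op_poly (pCons a p * q) X = a *\<^sub>R op_poly q X + (X o\<^sub>L (op_poly p X o\<^sub>L op_poly q X))"
    by (simp add: op_poly_add op_poly_smult op_poly_pCons pCons.IH)
  also have "\<dots> = op_poly (pCons a p) X o\<^sub>L op_poly q X"
    by (simp add: op_poly_pCons compose_add_left compose_scaleR_left compose_assoc compose_id_left)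
  finally show ?case .
qed

lemma op_poly_X: "op_poly [:0, 1:] X = X"
  by (simp add: op_poly_pCons op_poly_const blinfun_eqI)

lemma op_poly_linear: "op_poly [:b, a:] X = b *\<^sub>R id_blinfun + a *\<^sub>R X"
  by (rule blinfun_eqI) (simp add: op_poly_pCons op_poly_const app_simps)

lemma op_poly_commute: "X o\<^sub>L op_poly p X = op_poly p X o\<^sub>L X"
  by (metis op_poly_X op_poly_mult mult.commute)

lemma op_poly_bops: "X \<in> bops \<Longrightarrow> op_poly p X \<in> bops"
proof (induction p rule: pCons_induct)
  case 0 then show ?case by (simp add: bops_zero)
next
  case (pCons a p)
  then show ?case by (simp add: op_poly_pCons bops_add bops_scaleR bops_id bops_compose)
qed

lemma sa_compose_commute:
  assumes "self_adjoint A" "self_adjoint B" "A o\<^sub>L B = B o\<^sub>L A"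
  shows "self_adjoint (A o\<^sub>L B)"
  unfolding self_adjoint_def
proof (intro allI)
  fix x y
  have "cinner ((A o\<^sub>L B) x) y = cinner x (B (A y))"
    using assms(1,2) by (simp add: self_adjointD)
  also have "B (A y) = (A o\<^sub>L B) y" using assms(3) by (metis blinfun_apply_blinfun_compose)
  finally show "cinner ((A o\<^sub>L B) x) y = cinner x ((A o\<^sub>L B) y)" .
qed

lemma op_poly_sa: "self_adjoint X \<Longrightarrow> self_adjoint (op_poly p X)"
proof (induction p rule: pCons_induct)
  case 0 then show ?case by (simp add: sa_zero)
next
  case (pCons a p)
  then show ?case
    by (simp add: op_poly_pCons sa_add sa_scaleR sa_id sa_compose_commute op_poly_commute)
qed

definition cev :: "real poly \<Rightarrow> complex \<Rightarrow> complex" where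
  "cev q z = poly (map_poly complex_of_real q) z"

lemma cev_pCons: "cev (pCons a p) z = of_real a + z * cev p z"
  by (simp add: cev_def map_poly_pCons)

lemma cev_0 [simp]: "cev 0 z = 0"
  by (simp add: cev_def)

lemma cev_add: "cev (p + q) z = cev p z + cev q z"
proof -
  have "map_poly complex_of_real (p + q) = map_poly complex_of_real p + map_poly complex_of_real q"
    by (intro poly_eqI) (simp add: coeff_map_poly)
  thus ?thesis by (simp add: cev_def)
qed

lemma cev_smult: "cev (smult a q) z = of_real a * cev q z"
  by (simp add: cev_def map_poly_smult)

lemma cev_mult: "cev (p * q) z = cev p z * cev q z"
proof (induction p rule: pCons_induct)
  case 0 then show ?case by simp
next
  case (pCons a p)
  have "pCons a p * q = smult a q + pCons 0 (p * q)" by simp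
  hence "cev (pCons a p * q) z = of_real a * cev q z + z * (cev p z * cev q z)"
    by (simp add: cev_add cev_smult cev_pCons pCons.IH)
  thus ?case by (simp add: cev_pCons algebra_simps)
qed

lemma cev_real: "cev q (of_real r) = of_real (poly q r)"
  by (induction q rule: pCons_induct) (simp_all add: cev_pCons)

lemma bb_compose:
  assumes "bdd_below_op A" "bdd_below_op B" shows "bdd_below_op (A o\<^sub>L B)"
proof -
  obtain a where a: "a > 0" "\<And>x. a * norm x \<le> norm (A x)" using assms(1) unfolding bdd_below_op_def by blast
  obtain b where b: "b > 0" "\<And>x. b * norm x \<le> norm (B x)" using assms(2) unfolding bdd_below_op_def by blast
  have "a * b * norm x \<le> norm ((A o\<^sub>L B) x)" for x
  proof -
    have "a * (b * norm x) \<le> a * norm (B x)" using a(1) b(2) by (simp add: mult_left_mono)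
    also have "\<dots> \<le> norm (A (B x))" by (rule a(2))
    finally show ?thesis by (simp add: mult.assoc)
  qed
  thus ?thesis unfolding bdd_below_op_def using a b by (intro exI[of _ "a*b"]) auto
qed

lemma bb_const: "c \<noteq> 0 \<Longrightarrow> bdd_below_op (c *\<^sub>R (id_blinfun :: 'a::complex_hilbert \<Rightarrow>\<^sub>L 'a))"
  unfolding bdd_below_op_def by (intro exI[of _ "\<bar>c\<bar>"]) (simp add: app_simps)

lemma bb_linear:
  assumes "self_adjoint X" "r \<notin> real_spectrum X"
  shows "bdd_below_op (op_poly [:-r, 1:] X)"
proof -
  have "op_poly [:-r, 1:] X = X - r *\<^sub>R id_blinfun"
    by (simp add: op_poly_linear algebra_simps)
  moreover have "bdd_below_op (X - r *\<^sub>R id_blinfun)"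
    using assms by (intro sa_bij_bdd_below sa_diff sa_scaleR sa_id) (auto simp: real_spectrum_def)
  ultimately show ?thesis by simp
qed

lemma bb_quad:
  assumes sa: "self_adjoint X" and b: "b \<noteq> 0"
  shows "bdd_below_op (op_poly ([:-a, 1:] * [:-a, 1:] + [:b*b:]) X)"
proof (rule coercive_bdd_below)
  show "0 < b * b" by (metis b linorder_neqE_linordered_idom mult_neg_neg mult_pos_pos)
  fix x
  define Y where "Y = op_poly [:-a, 1:] X"
  have saY: "self_adjoint Y" unfolding Y_def by (rule op_poly_sa[OF sa])
  have "op_poly ([:-a, 1:] * [:-a, 1:] + [:b*b:]) X = (Y o\<^sub>L Y) + (b*b) *\<^sub>R id_blinfun"
    unfolding Y_def op_poly_add op_poly_mult op_poly_const ..
  hence "Re (cinner x (op_poly ([:-a, 1:] * [:-a, 1:] + [:b*b:]) X x)) = Re (cinner x (Y (Y x))) + b * b * (norm x)^2"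
    by (simp add: app_simps cinner_add_right cinner_scaleR_right Re_cinner_self)
  also have "Re (cinner x (Y (Y x))) = (norm (Y x))^2"
    using self_adjointD[OF saY, of x "Y x"] by (metis Re_cinner_self)
  finally show "b * b * (norm x)^2 \<le> Re (cinner x (op_poly ([:-a, 1:] * [:-a, 1:] + [:b*b:]) X x))"
    by simp
qed

lemma deg1_poly: "degree (r::real poly) \<le> 1 \<Longrightarrow> r = [:coeff r 0, coeff r 1:]"
  by (intro poly_eqI) (auto simp: coeff_pCons coeff_eq_0 split: nat.splits)

lemma poly_no_root_bb:
  assumes sa: "self_adjoint X"
  shows "q \<noteq> 0 \<Longrightarrow> (\<forall>\<mu>\<in>real_spectrum X. poly q \<mu> \<noteq> 0) \<Longrightarrow> bdd_below_op (op_poly q X)"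
proof (induction "degree q" arbitrary: q rule: less_induct)
  case less
  show ?case
  proof (cases "degree q = 0")
    case True
    then obtain c where q: "q = [:c:]" by (metis degree_eq_zeroE)
    hence "c \<noteq> 0" using less.prems by auto
    thus ?thesis by (simp add: q op_poly_const bb_const)
  next
    case deg: False
    show ?thesis
    proof (cases "\<exists>r. poly q r = 0")
      case True
      then obtain r where r: "poly q r = 0" by blast
      then obtain q' where q': "q = [:-r, 1:] * q'" by (metis poly_eq_0_iff_dvd dvd_def)
      have q'0: "q' \<noteq> 0" using less.prems q' by auto
      have "degree ([:-r, 1:] * q') = degree [:-r, 1:] + degree q'" by (rule degree_mult_eq) (use q'0 in auto)
      hence dq: "degree q = Suc (degree q')" using q' by simp
      have roots: "\<forall>\<mu>\<in>real_spectrum X. poly q' \<mu> \<noteq> 0" using less.prems q' by auto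
      have rs: "r \<notin> real_spectrum X" using less.prems r by auto
      have "bdd_below_op (op_poly [:-r, 1:] X o\<^sub>L op_poly q' X)"
        by (intro bb_compose bb_linear[OF sa rs] less.hyps q'0 roots) (simp add: dq)
      thus ?thesis by (simp only: q' op_poly_mult)
    next
      case False
      have "\<not> constant (poly (map_poly complex_of_real q))"
        using deg by (simp add: constant_degree degree_map_poly)
      then obtain z where z: "cev q z = 0" using fundamental_theorem_of_algebra by (auto simp: cev_def)
      define a where "a = Re z"
      define b where "b = Im z"
      have b0: "b \<noteq> 0"
      proof
        assume "b = 0"
        hence "z = of_real a" by (simp add: a_def b_def complex_eq_iff)
        hence "poly q a = 0" using z by (simp add: cev_real)
        thus False using False by blast
      qed
      define D where "D = [:-a, 1:] * [:-a, 1:] + [:b*b:]"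
      have D0: "D \<noteq> 0" by (simp add: D_def)
      have degD: "degree D = 2" unfolding D_def
        by (simp add: degree_add_eq_left degree_mult_eq)
      have cevD: "cev D z = 0"
      proof -
        have "cev D z = (z - of_real a) * (z - of_real a) + of_real (b*b)"
          by (simp add: D_def cev_add cev_mult cev_pCons algebra_simps)
        also have "z - of_real a = \<i> * of_real b" by (simp add: a_def b_def complex_eq_iff)
        finally show ?thesis by (simp add: algebra_simps)
      qed
      define r where "r = q mod D"
      have qdec: "q = D * (q div D) + r" by (simp add: r_def)
      have "degree r < 2 \<or> r = 0" using degree_mod_less[OF D0, of q] degD by (auto simp: r_def)
      hence dr: "degree r \<le> 1" by auto
      have "cev r z = 0" using z cevD qdec by (metis cev_add cev_mult add_0 mult_zero_left)
      hence "of_real (coeff r 0) + z * of_real (coeff r 1) = 0"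
        using deg1_poly[OF dr] by (metis cev_pCons cev_0 mult_zero_right add_0_right)
      hence "coeff r 1 * b = 0" "coeff r 0 + a * coeff r 1 = 0"
        by (auto simp: complex_eq_iff a_def b_def)
      hence "coeff r 1 = 0" "coeff r 0 = 0" using b0 by auto
      hence r0: "r = 0" using deg1_poly[OF dr] by simp
      define q' where "q' = q div D"
      have q': "q = D * q'" using qdec r0 by (simp add: q'_def)
      have q'0: "q' \<noteq> 0" using less.prems q' by auto
      have "degree (D * q') = degree D + degree q'" by (rule degree_mult_eq) (use q'0 D0 in auto)
      hence dq: "degree q = 2 + degree q'" using q' degD by simp
      have roots: "\<forall>\<mu>\<in>real_spectrum X. poly q' \<mu> \<noteq> 0" using less.prems q' by auto
      have "bdd_below_op (op_poly D X o\<^sub>L op_poly q' X)"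
        unfolding D_def by (intro bb_compose bb_quad[OF sa b0] less.hyps q'0 roots) (simp add: dq)
      thus ?thesis by (simp only: q' op_poly_mult)
    qed
  qed
qed

lemma quad_discr:
  fixes A B C :: real
  assumes q: "\<And>s. 0 \<le> A + 2 * s * B + s^2 * C" and C: "0 \<le> C"
  shows "B^2 \<le> A * C"
proof (cases "C = 0")
  case True
  have "B = 0"
  proof (rule ccontr)
    assume B: "B \<noteq> 0"
    have "0 \<le> A + 2 * (-(A+1)/(2*B)) * B" using q[of "-(A+1)/(2*B)"] True by simp
    also have "\<dots> = -1" using B by (simp add: field_simps)
    finally show False by simp
  qed
  thus ?thesis using True by simp
next
  case False
  hence Cp: "C > 0" using C by simp
  have "0 \<le> A + 2 * (-B/C) * B + (-B/C)^2 * C" by (rule q)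
  also have "\<dots> = A - B^2 / C" using Cp by (simp add: field_simps power2_eq_square)
  finally show ?thesis using Cp by (simp add: field_simps)
qed

lemma pos_op_CS:
  assumes sa: "self_adjoint P" and pos: "\<And>x. 0 \<le> Re (cinner x (P x))"
  shows "(norm (P x))^2 \<le> norm P * Re (cinner x (P x))"
proof (cases "P x = 0")
  case True then show ?thesis using pos[of x] by simp
next
  case False
  define A where "A = Re (cinner x (P x))"
  define B where "B = (norm (P x))^2"
  define C where "C = Re (cinner (P x) (P (P x)))"
  have PP: "Re (cinner x (P (P x))) = B"
    using self_adjointD[OF sa, of x "P x"] by (metis B_def Re_cinner_self)
  have "(norm (P x))^2 * (norm (P x))^2 \<le> A * C"
  proof -
    have "B^2 \<le> A * C"
    proof (rule quad_discr)
      fix s :: real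
      have "0 \<le> Re (cinner (x + s *\<^sub>R P x) (P (x + s *\<^sub>R P x)))" by (rule pos)
      also have "\<dots> = A + 2 * s * B + s^2 * C"
        using PP by (simp add: A_def B_def C_def app_simps cinner_add_left cinner_add_right
            cinner_scaleR_left cinner_scaleR_right Re_cinner_self power2_eq_square algebra_simps)
      finally show "0 \<le> A + 2 * s * B + s^2 * C" .
    qed (simp add: C_def pos)
    thus ?thesis by (simp add: B_def power2_eq_square)
  qed
  also have "\<dots> \<le> A * (norm P * (norm (P x))^2)"
    by (intro mult_left_mono) (auto simp: A_def C_def pos Re_quad_le)
  finally have "(norm (P x))^2 * (norm (P x))^2 \<le> (norm P * A) * (norm (P x))^2"
    by (simp add: mult_ac)
  moreover have "(norm (P x))^2 > 0" using False by simp
  ultimately show ?thesis by (metis A_def mult_le_cancel_right_pos)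
qed

lemma quad_scale: fixes T :: "'a::complex_hilbert \<Rightarrow>\<^sub>L 'a" shows "Re (cinner (c *\<^sub>R x) (T (c *\<^sub>R x))) = c^2 * Re (cinner x (T x))"
  by (simp add: app_simps cinner_scaleR_left cinner_scaleR_right power2_eq_square)

lemma inf_ap:
  fixes T :: "'a::complex_hilbert \<Rightarrow>\<^sub>L 'a"
  assumes sa: "self_adjoint T" and x0: "x0 \<noteq> 0"
  shows "\<exists>a. (\<forall>x. a * (norm x)^2 \<le> Re (cinner x (T x))) \<and>
             \<not> bdd_below_op (T - a *\<^sub>R id_blinfun) \<and>
             a * (norm x0)^2 \<le> Re (cinner x0 (T x0))"
proof -
  define U where "U = (\<lambda>u. Re (cinner u (T u))) ` {u. norm u = 1}"
  define a where "a = Inf U"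
  define u0 where "u0 = (1 / norm x0) *\<^sub>R x0"
  have u0: "norm u0 = 1" using x0 by (simp add: u0_def)
  have Une: "U \<noteq> {}" using u0 by (auto simp: U_def)
  have Ubdd: "bdd_below U"
  proof (rule bdd_belowI)
    fix y assume "y \<in> U"
    then obtain u where u: "norm u = 1" "y = Re (cinner u (T u))" by (auto simp: U_def)
    show "- norm T \<le> y" using abs_Re_quad_le[of u T] u by (simp add: abs_le_iff)
  qed
  have lower_unit: "a \<le> Re (cinner u (T u))" if "norm u = 1" for u
    unfolding a_def by (rule cInf_lower[OF _ Ubdd]) (use that in \<open>auto simp: U_def\<close>)
  have lower: "a * (norm x)^2 \<le> Re (cinner x (T x))" for x
  proof (cases "x = 0")
    case True then show ?thesis by simp
  next
    case False
    have "a \<le> Re (cinner ((1 / norm x) *\<^sub>R x) (T ((1 / norm x) *\<^sub>R x)))"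
      using False by (intro lower_unit) simp
    also have "\<dots> = Re (cinner x (T x)) / (norm x)^2"
      by (simp add: quad_scale power_divide)
    finally show ?thesis using False by (simp add: field_simps)
  qed
  define P where "P = T - a *\<^sub>R id_blinfun"
  have saP: "self_adjoint P" unfolding P_def by (intro sa_diff sa_scaleR sa_id sa)
  have Pq: "Re (cinner x (P x)) = Re (cinner x (T x)) - a * (norm x)^2" for x
    by (simp add: P_def app_simps cinner_diff_right cinner_scaleR_right Re_cinner_self)
  have posP: "0 \<le> Re (cinner x (P x))" for x using lower[of x] Pq[of x] by simp
  have nbb: "\<not> bdd_below_op P"
  proof
    assume "bdd_below_op P"
    then obtain k where k: "k > 0" "\<And>x. k * norm x \<le> norm (P x)" unfolding bdd_below_op_def by blast
    define d where "d = k^2 / (norm P + 1)"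
    have nP: "norm P + 1 > 0" by (simp add: add_nonneg_pos)
    have d: "d > 0" using k by (simp add: d_def add_nonneg_pos)
    have "Inf U < a + d" using d by (simp add: a_def)
    then obtain y where "y \<in> U" "y < a + d" using cInf_lessD[OF Une] by blast
    then obtain u where u: "norm u = 1" "Re (cinner u (T u)) < a + d" by (auto simp: U_def)
    have "k^2 \<le> (norm (P u))^2" using k(2)[of u] u(1) k(1) by (simp add: power_mono)
    also have "\<dots> \<le> norm P * Re (cinner u (P u))" by (rule pos_op_CS[OF saP posP])
    also have "\<dots> \<le> norm P * d" using u Pq[of u] by (intro mult_left_mono) auto
    also have "\<dots> < k^2"
    proof -
      have "norm P * d < (norm P + 1) * d" using d by simp
      also have "\<dots> = k^2" using nP by (simp add: d_def)
      finally show ?thesis .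
    qed
    finally show False by simp
  qed
  show ?thesis using lower nbb by (intro exI[of _ a]) (auto simp: P_def)
qed

lemma spectrum_nonempty:
  fixes X :: "'a::complex_hilbert \<Rightarrow>\<^sub>L 'a" and x0 :: 'a
  assumes sa: "self_adjoint X" and x0: "x0 \<noteq> 0"
  shows "real_spectrum X \<noteq> {}"
proof -
  obtain a where "\<not> bdd_below_op (X - a *\<^sub>R id_blinfun)" using inf_ap[of X x0] sa x0 by blast
  hence "\<not> bij (blinfun_apply (X - a *\<^sub>R id_blinfun))"
    using sa_bij_bdd_below sa_diff sa_scaleR sa_id sa by blast
  thus ?thesis by (auto simp: real_spectrum_def)
qed

lemma poly_spec_ge:
  fixes X :: "'a::complex_hilbert \<Rightarrow>\<^sub>L 'a"
  assumes sa: "self_adjoint X" and ge: "\<And>\<mu>. \<mu> \<in> real_spectrum X \<Longrightarrow> c \<le> poly p \<mu>"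
  shows "c * (norm x)^2 \<le> Re (cinner x (op_poly p X x))"
proof (rule ccontr)
  assume neg: "\<not> ?thesis"
  hence x0: "x \<noteq> 0" by auto
  define T where "T = op_poly p X"
  have saT: "self_adjoint T" unfolding T_def by (rule op_poly_sa[OF sa])
  obtain a where a: "\<forall>x. a * (norm x)^2 \<le> Re (cinner x (T x))"
      "\<not> bdd_below_op (T - a *\<^sub>R id_blinfun)" "a * (norm x)^2 \<le> Re (cinner x (T x))"
    using inf_ap[of T x] saT x0 by blast
  have "a * (norm x)^2 < c * (norm x)^2" using a(3) neg by (simp add: T_def)
  hence ac: "a < c" using x0 by simp
  show False
  proof (cases "p - [:a:] = 0")
    case True
    obtain \<mu> where "\<mu> \<in> real_spectrum X" using spectrum_nonempty[of X x] sa x0 by blast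
    hence "c \<le> poly p \<mu>" by (rule ge)
    moreover have "p = [:a:]" using True by simp
    hence "poly p \<mu> = a" by simp
    ultimately show False using ac by simp
  next
    case False
    have "\<forall>\<mu>\<in>real_spectrum X. poly (p - [:a:]) \<mu> \<noteq> 0" using ge ac by force
    hence "bdd_below_op (op_poly (p - [:a:]) X)" by (rule poly_no_root_bb[OF sa False])
    moreover have "op_poly (p - [:a:]) X = T - a *\<^sub>R id_blinfun"
      by (simp add: T_def op_poly_diff op_poly_const)
    ultimately show False using a(2) by simp
  qed
qed

lemma poly_spec_norm:
  fixes X :: "'a::complex_hilbert \<Rightarrow>\<^sub>L 'a"
  assumes sa: "self_adjoint X" and e: "0 \<le> e" and le: "\<And>\<mu>. \<mu> \<in> real_spectrum X \<Longrightarrow> \<bar>poly p \<mu>\<bar> \<le> e"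
  shows "norm (op_poly p X) \<le> e"
proof (rule sa_norm_le[OF op_poly_sa[OF sa] e])
  fix x
  have 1: "-e * (norm x)^2 \<le> Re (cinner x (op_poly p X x))"
    by (rule poly_spec_ge[OF sa]) (use le in \<open>force simp: abs_le_iff\<close>)
  have 2: "-e * (norm x)^2 \<le> Re (cinner x (op_poly (-p) X x))"
    by (rule poly_spec_ge[OF sa]) (use le in \<open>force simp: abs_le_iff\<close>)
  have "Re (cinner x (op_poly (-p) X x)) = - Re (cinner x (op_poly p X x))"
    by (simp add: op_poly_minus app_simps cinner_minus_right)
  thus "\<bar>Re (cinner x (op_poly p X x))\<bar> \<le> e * (norm x)^2" using 1 2 by (simp add: abs_le_iff)
qed

abbreviation ulim :: "real set \<Rightarrow> (nat \<Rightarrow> real poly) \<Rightarrow> (real \<Rightarrow> real) \<Rightarrow> bool" where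
  "ulim S p g \<equiv> uniform_limit S (\<lambda>n x. poly (p n) x) g sequentially"

lemma ulim_N:
  assumes "ulim S p g" "e > 0"
  shows "\<exists>N. \<forall>n\<ge>N. \<forall>x\<in>S. \<bar>poly (p n) x - g x\<bar> < e"
  using uniform_limitD[OF assms] by (auto simp: eventually_sequentially dist_real_def)

lemma abs_tri_half: fixes a b c e :: real
  shows "\<bar>a - c\<bar> < e/2 \<Longrightarrow> \<bar>b - c\<bar> < e/2 \<Longrightarrow> \<bar>a - b\<bar> \<le> e"
  by (auto simp: abs_if split: if_split_asm)

lemma op_poly_close:
  fixes X :: "'a::complex_hilbert \<Rightarrow>\<^sub>L 'a"
  assumes sa: "self_adjoint X" and p: "ulim (real_spectrum X) p g" and q: "ulim (real_spectrum X) q g"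
    and e: "e > 0"
  shows "\<exists>N. \<forall>n\<ge>N. \<forall>k\<ge>N. norm (op_poly (p n) X - op_poly (q k) X) \<le> e"
proof -
  obtain N1 where N1: "\<forall>n\<ge>N1. \<forall>x\<in>real_spectrum X. \<bar>poly (p n) x - g x\<bar> < e/2"
    using ulim_N[OF p, of "e/2"] e by auto
  obtain N2 where N2: "\<forall>n\<ge>N2. \<forall>x\<in>real_spectrum X. \<bar>poly (q n) x - g x\<bar> < e/2"
    using ulim_N[OF q, of "e/2"] e by auto
  show ?thesis
  proof (intro exI[of _ "max N1 N2"] allI impI)
    fix n k assume n: "max N1 N2 \<le> n" and k: "max N1 N2 \<le> k"
    have "norm (op_poly (p n - q k) X) \<le> e"
    proof (rule poly_spec_norm[OF sa])
      fix \<mu> assume "\<mu> \<in> real_spectrum X"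
      hence "\<bar>poly (p n) \<mu> - g \<mu>\<bar> < e/2" "\<bar>poly (q k) \<mu> - g \<mu>\<bar> < e/2" using N1 N2 n k by auto
      thus "\<bar>poly (p n - q k) \<mu>\<bar> \<le> e" unfolding poly_diff by (rule abs_tri_half)
    qed (use e in simp)
    thus "norm (op_poly (p n) X - op_poly (q k) X) \<le> e" by (simp add: op_poly_diff)
  qed
qed

lemma opfun_tendsto:
  fixes X :: "'a::complex_hilbert \<Rightarrow>\<^sub>L 'a"
  assumes sa: "self_adjoint X" and p0: "ulim (real_spectrum X) p0 g"
    and p: "ulim (real_spectrum X) p g"
  shows "(\<lambda>n. op_poly (p n) X) \<longlonglongrightarrow> opfun g X"
proof -
  have "Cauchy (\<lambda>n. op_poly (p0 n) X)"
  proof (rule CauchyI)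
    fix e :: real assume e: "e > 0"
    obtain N where "\<forall>n\<ge>N. \<forall>k\<ge>N. norm (op_poly (p0 n) X - op_poly (p0 k) X) \<le> e/2"
      using op_poly_close[OF sa p0 p0, of "e/2"] e by auto
    thus "\<exists>M. \<forall>m\<ge>M. \<forall>n\<ge>M. norm (op_poly (p0 m) X - op_poly (p0 n) X) < e"
      using e by (intro exI[of _ N]) force
  qed
  then obtain B0 where B0: "(\<lambda>n. op_poly (p0 n) X) \<longlonglongrightarrow> B0"
    using Cauchy_convergent_iff convergent_def by blast
  have key: "(\<lambda>n. op_poly (q n) X) \<longlonglongrightarrow> B0" if q: "ulim (real_spectrum X) q g" for q
  proof -
    have "(\<lambda>n. op_poly (q n) X - op_poly (p0 n) X) \<longlonglongrightarrow> 0"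
    proof (rule LIMSEQ_I)
      fix r :: real assume r: "r > 0"
      obtain N where "\<forall>n\<ge>N. \<forall>k\<ge>N. norm (op_poly (q n) X - op_poly (p0 k) X) \<le> r/2"
        using op_poly_close[OF sa q p0, of "r/2"] r by auto
      thus "\<exists>no. \<forall>n\<ge>no. norm (op_poly (q n) X - op_poly (p0 n) X - 0) < r"
        using r by (intro exI[of _ N]) force
    qed
    from tendsto_add[OF this B0] show ?thesis by simp
  qed
  have "opfun g X = B0"
    unfolding opfun_def
  proof (rule the_equality)
    show "\<forall>p. ulim (real_spectrum X) p g \<longrightarrow> (\<lambda>n. op_poly (p n) X) \<longlonglongrightarrow> B0"
      using key by blast
  next
    fix B assume "\<forall>p. ulim (real_spectrum X) p g \<longrightarrow> (\<lambda>n. op_poly (p n) X) \<longlonglongrightarrow> B"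
    hence "(\<lambda>n. op_poly (p0 n) X) \<longlonglongrightarrow> B" using p0 by blast
    thus "B = B0" using B0 LIMSEQ_unique by blast
  qed
  thus ?thesis using key[OF p] by simp
qed

lemma weier:
  fixes S :: "real set"
  assumes "compact S" "continuous_on S g"
  shows "\<exists>p. ulim S p g"
proof -
  have "\<exists>q. \<forall>x\<in>S. \<bar>g x - poly q x\<bar> < 1 / Suc n" for n
  proof -
    obtain h where h: "real_polynomial_function h" "\<And>x. x \<in> S \<Longrightarrow> \<bar>g x - h x\<bar> < 1 / Suc n"
      using Stone_Weierstrass_real_polynomial_function[OF assms, of "1 / Suc n"] by auto
    obtain a k where hk: "h = (\<lambda>x. \<Sum>i\<le>k. a i * x^i)"
      using h(1) real_polynomial_function_iff_sum by blast
    have "poly (\<Sum>i\<le>k. monom (a i) i) x = h x" for x by (simp add: hk poly_sum poly_monom)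
    thus ?thesis using h(2) by metis
  qed
  then obtain p where p: "\<And>n. \<forall>x\<in>S. \<bar>g x - poly (p n) x\<bar> < 1 / Suc n" by metis
  have "ulim S p g"
  proof (rule uniform_limitI)
    fix e :: real assume e: "e > 0"
    obtain N :: nat where N: "1 / e < N" using reals_Archimedean2 by blast
    have "\<forall>x\<in>S. dist (poly (p n) x) (g x) < e" if n: "n \<ge> N" for n
    proof
      fix x assume "x \<in> S"
      hence "\<bar>g x - poly (p n) x\<bar> < 1 / Suc n" using p by blast
      also have "1 / Suc n < e"
      proof -
        have "1 / e < Suc n" using N n by linarith
        thus ?thesis using e by (simp add: field_simps)
      qed
      finally show "dist (poly (p n) x) (g x) < e" by (simp add: dist_real_def abs_minus_commute)
    qed
    thus "\<forall>\<^sub>F n in sequentially. \<forall>x\<in>S. dist (poly (p n) x) (g x) < e"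
      unfolding eventually_sequentially by blast
  qed
  thus ?thesis by blast
qed

lemma opfun_poly:
  fixes X :: "'a::complex_hilbert \<Rightarrow>\<^sub>L 'a"
  assumes sa: "self_adjoint X"
  shows "opfun (poly q) X = op_poly q X"
proof -
  have u: "ulim (real_spectrum X) (\<lambda>n. q) (poly q)" by (rule uniform_limitI) simp
  from opfun_tendsto[OF sa u u] show ?thesis by (simp add: LIMSEQ_const_iff)
qed

lemma opfun_scale:
  fixes X :: "'a::complex_hilbert \<Rightarrow>\<^sub>L 'a"
  assumes sa: "self_adjoint X" and p: "ulim (real_spectrum X) p g"
  shows "opfun (\<lambda>x. c * g x) X = c *\<^sub>R opfun g X"
proof -
  have u: "ulim (real_spectrum X) (\<lambda>n. smult c (p n)) (\<lambda>x. c * g x)"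
  proof (rule uniform_limitI)
    fix e :: real assume e: "e > 0"
    obtain N where N: "\<forall>n\<ge>N. \<forall>x\<in>real_spectrum X. \<bar>poly (p n) x - g x\<bar> < e / (\<bar>c\<bar> + 1)"
      using ulim_N[OF p, of "e / (\<bar>c\<bar> + 1)"] e by auto
    have "\<forall>x\<in>real_spectrum X. dist (poly (smult c (p n)) x) (c * g x) < e" if n: "n \<ge> N" for n
    proof
      fix x assume x: "x \<in> real_spectrum X"
      have "dist (poly (smult c (p n)) x) (c * g x) = \<bar>c\<bar> * \<bar>poly (p n) x - g x\<bar>"
        by (simp add: dist_real_def abs_mult[symmetric] right_diff_distrib)
      also have "\<dots> \<le> (\<bar>c\<bar> + 1) * \<bar>poly (p n) x - g x\<bar>" by (simp add: mult_right_mono)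
      also have "\<dots> < (\<bar>c\<bar> + 1) * (e / (\<bar>c\<bar> + 1))"
        using N n x by (intro mult_strict_left_mono) (auto simp: add_nonneg_pos)
      also have "\<dots> = e" by (simp add: add_nonneg_pos)
      finally show "dist (poly (smult c (p n)) x) (c * g x) < e" .
    qed
    thus "\<forall>\<^sub>F n in sequentially. \<forall>x\<in>real_spectrum X. dist (poly (smult c (p n)) x) (c * g x) < e"
      unfolding eventually_sequentially by blast
  qed
  have "(\<lambda>n. op_poly (smult c (p n)) X) \<longlonglongrightarrow> opfun (\<lambda>x. c * g x) X"
    by (rule opfun_tendsto[OF sa u u])
  moreover have "(\<lambda>n. op_poly (smult c (p n)) X) \<longlonglongrightarrow> c *\<^sub>R opfun g X"
    unfolding op_poly_smult by (intro tendsto_scaleR tendsto_const opfun_tendsto[OF sa p p])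
  ultimately show ?thesis using LIMSEQ_unique by blast
qed

lemma apply_tendsto:
  fixes Y :: "nat \<Rightarrow> ('a::complex_hilbert \<Rightarrow>\<^sub>L 'a)"
  assumes "Y \<longlonglongrightarrow> B"
  shows "(\<lambda>n. Re (cinner x (Y n x))) \<longlonglongrightarrow> Re (cinner x (B x))"
    and "(\<lambda>n. Im (cinner x (Y n x))) \<longlonglongrightarrow> Im (cinner x (B x))"
   apply (intro bounded_bilinear.tendsto[OF bounded_bilinear_Re_cinner] tendsto_const
         blinfun.tendsto assms)
  apply (intro bounded_bilinear.tendsto[OF bounded_bilinear_Im_cinner] tendsto_const
         blinfun.tendsto assms)
  done

lemma opfun_mono:
  fixes X :: "'a::complex_hilbert \<Rightarrow>\<^sub>L 'a"
  assumes sa: "self_adjoint X" and p: "ulim (real_spectrum X) p h1" and q: "ulim (real_spectrum X) q h2"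
    and le: "\<And>\<mu>. \<mu> \<in> real_spectrum X \<Longrightarrow> h1 \<mu> \<le> h2 \<mu>"
  shows "op_le (opfun h1 X) (opfun h2 X)"
  unfolding op_le_iff
proof (intro allI conjI)
  fix x
  have P: "(\<lambda>n. op_poly (p n) X) \<longlonglongrightarrow> opfun h1 X" by (rule opfun_tendsto[OF sa p p])
  have Q: "(\<lambda>n. op_poly (q n) X) \<longlonglongrightarrow> opfun h2 X" by (rule opfun_tendsto[OF sa q q])
  have "(\<lambda>n. Im (cinner x (op_poly (p n) X x))) \<longlonglongrightarrow> Im (cinner x (opfun h1 X x))"
    by (rule apply_tendsto(2)[OF P])
  moreover have "(\<lambda>n. Im (cinner x (op_poly (p n) X x))) = (\<lambda>n. 0)"
    using self_adjoint_Im[OF op_poly_sa[OF sa]] by simp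
  ultimately have 1: "Im (cinner x (opfun h1 X x)) = 0" using LIMSEQ_const_iff by metis
  have "(\<lambda>n. Im (cinner x (op_poly (q n) X x))) \<longlonglongrightarrow> Im (cinner x (opfun h2 X x))"
    by (rule apply_tendsto(2)[OF Q])
  moreover have "(\<lambda>n. Im (cinner x (op_poly (q n) X x))) = (\<lambda>n. 0)"
    using self_adjoint_Im[OF op_poly_sa[OF sa]] by simp
  ultimately have 2: "Im (cinner x (opfun h2 X x)) = 0" using LIMSEQ_const_iff by metis
  show "Im (cinner x (opfun h2 X x)) = Im (cinner x (opfun h1 X x))" using 1 2 by simp
  define D where "D = Re (cinner x (opfun h2 X x)) - Re (cinner x (opfun h1 X x))"
  have lim: "(\<lambda>n. Re (cinner x (op_poly (q n) X x)) - Re (cinner x (op_poly (p n) X x))) \<longlonglongrightarrow> D"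
    unfolding D_def by (intro tendsto_diff apply_tendsto(1) P Q)
  have bound: "- 2 * e * (norm x)^2 \<le> D" if e: "e > 0" for e
  proof (rule tendsto_lowerbound[OF lim])
    obtain N1 where N1: "\<forall>n\<ge>N1. \<forall>x\<in>real_spectrum X. \<bar>poly (p n) x - h1 x\<bar> < e"
      using ulim_N[OF p e] by auto
    obtain N2 where N2: "\<forall>n\<ge>N2. \<forall>x\<in>real_spectrum X. \<bar>poly (q n) x - h2 x\<bar> < e"
      using ulim_N[OF q e] by auto
    have "- 2 * e * (norm x)^2 \<le> Re (cinner x (op_poly (q n) X x)) - Re (cinner x (op_poly (p n) X x))"
      if n: "n \<ge> max N1 N2" for n
    proof -
      have "- 2 * e * (norm x)^2 \<le> Re (cinner x (op_poly (q n - p n) X x))"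
      proof (rule poly_spec_ge[OF sa])
        fix \<mu> assume "\<mu> \<in> real_spectrum X"
        hence "\<bar>poly (p n) \<mu> - h1 \<mu>\<bar> < e" "\<bar>poly (q n) \<mu> - h2 \<mu>\<bar> < e" "h1 \<mu> \<le> h2 \<mu>"
          using N1 N2 n le by auto
        thus "- 2 * e \<le> poly (q n - p n) \<mu>" by (simp add: abs_less_iff)
      qed
      thus ?thesis by (simp add: op_poly_diff app_simps cinner_diff_right)
    qed
    thus "\<forall>\<^sub>F n in sequentially. - 2 * e * (norm x)^2 \<le>
        Re (cinner x (op_poly (q n) X x)) - Re (cinner x (op_poly (p n) X x))"
      unfolding eventually_sequentially by blast
  qed simp
  show "Re (cinner x (opfun h1 X x)) \<le> Re (cinner x (opfun h2 X x))"
  proof (rule ccontr)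
    assume "\<not> ?thesis"
    hence D: "D < 0" by (simp add: D_def)
    define c where "c = (norm x)^2"
    have c: "c \<ge> 0" by (simp add: c_def)
    have "- 2 * (- D / (4 * (c + 1))) * c \<le> D" using bound[of "- D / (4 * (c + 1))"] D c
      by (simp add: c_def add_nonneg_pos divide_neg_pos)
    moreover have "- 2 * (- D / (4 * (c + 1))) * c = D * c / (2 * (c + 1))" using c
      by (simp add: field_simps)
    moreover have "D * c / (2 * (c + 1)) > D"
    proof -
      have "D * c > D * (2 * (c + 1))" using D c by (simp add: mult_less_cancel_left_neg)
      thus ?thesis using c by (simp add: field_simps add_nonneg_pos)
    qed
    ultimately show False by simp
  qed
qed

lemma norm_scaleC: "norm (scaleC c x) = cmod c * norm x"
proof -
  have "(norm (scaleC c x))^2 = Re (cinner (scaleC c x) (scaleC c x))" by (simp add: Re_cinner_self)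
  also have "cinner (scaleC c x) (scaleC c x) = (c * cnj c) * cinner x x"
    by (simp add: cinner_scaleC_left cinner_scaleC_right mult_ac)
  also have "c * cnj c = of_real ((cmod c)^2)" by (rule complex_norm_square[symmetric])
  also have "Re (of_real ((cmod c)^2) * cinner x x) = (cmod c)^2 * (norm x)^2"
    by (simp add: Re_cinner_self)
  finally have "(norm (scaleC c x))^2 = (cmod c * norm x)^2" by (simp add: power_mult_distrib)
  thus ?thesis by (simp add: power2_eq_iff_nonneg)
qed

lemma bounded_linear_scaleC: "bounded_linear (scaleC c :: 'a::complex_hilbert \<Rightarrow> 'a)"
  by (rule bounded_linear_intro[of _ "cmod c"])
     (auto simp: scaleC_add_right scaleC_scaleR norm_scaleC)

lemma bops_closed:
  fixes Y :: "nat \<Rightarrow> ('a::complex_hilbert \<Rightarrow>\<^sub>L 'a)"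
  assumes lim: "Y \<longlonglongrightarrow> B" and Y: "\<And>n. Y n \<in> bops"
  shows "B \<in> bops"
  unfolding bops_def
proof (intro CollectI allI)
  fix c x
  have "(\<lambda>n. Y n (scaleC c x)) \<longlonglongrightarrow> B (scaleC c x)" by (intro blinfun.tendsto lim tendsto_const)
  moreover have "(\<lambda>n. Y n (scaleC c x)) = (\<lambda>n. scaleC c (Y n x))" using Y by (simp add: bops_def)
  moreover have "(\<lambda>n. scaleC c (Y n x)) \<longlonglongrightarrow> scaleC c (B x)"
    by (intro bounded_linear.tendsto[OF bounded_linear_scaleC] blinfun.tendsto lim tendsto_const)
  ultimately show "B (scaleC c x) = scaleC c (B x)" using LIMSEQ_unique by metis
qed

lemma opfun_bops:
  fixes X :: "'a::complex_hilbert \<Rightarrow>\<^sub>L 'a"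
  assumes sa: "self_adjoint X" and X: "X \<in> bops" and p: "ulim (real_spectrum X) p g"
  shows "opfun g X \<in> bops"
  by (rule bops_closed[OF opfun_tendsto[OF sa p p]]) (rule op_poly_bops[OF X])

lemma exp_convex2:
  fixes l a b :: real
  assumes "0 \<le> l" "l \<le> 1"
  shows "exp (l*a + (1-l)*b) \<le> l * exp a + (1-l) * exp b"
proof -
  define c where "c = l*a + (1-l)*b"
  have ea: "exp c * (1 + (a - c)) \<le> exp a"
  proof -
    have "exp c * (1 + (a - c)) \<le> exp c * exp (a - c)" by (intro mult_left_mono exp_ge_add_one_self) auto
    thus ?thesis by (simp add: exp_diff)
  qed
  have eb: "exp c * (1 + (b - c)) \<le> exp b"
  proof -
    have "exp c * (1 + (b - c)) \<le> exp c * exp (b - c)" by (intro mult_left_mono exp_ge_add_one_self) auto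
    thus ?thesis by (simp add: exp_diff)
  qed
  have "exp c = l * (exp c * (1 + (a - c))) + (1-l) * (exp c * (1 + (b - c)))"
    by (simp add: c_def algebra_simps)
  also have "\<dots> \<le> l * exp a + (1-l) * exp b"
    using assms by (intro add_mono mult_left_mono ea eb) auto
  finally show ?thesis by (simp add: c_def)
qed

lemma g_exp:
  fixes m M t x :: real
  assumes "0 < m" "m < M"
  shows "(M powr (x - m) * m powr (M - x)) powr (t / (M - m)) =
         exp (((x-m)/(M-m)) * (t * ln M) + (1 - (x-m)/(M-m)) * (t * ln m))"
proof -
  have M0: "M > 0" using assms by simp
  have "M powr (x - m) * m powr (M - x) = exp ((x - m) * ln M + (M - x) * ln m)"
    using assms M0 by (simp add: powr_def exp_add)
  hence "(M powr (x - m) * m powr (M - x)) powr (t / (M - m)) = exp (t / (M - m) * ((x - m) * ln M + (M - x) * ln m))"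
    by (simp add: powr_def)
  also have "t / (M - m) * ((x - m) * ln M + (M - x) * ln m) =
      ((x-m)/(M-m)) * (t * ln M) + (1 - (x-m)/(M-m)) * (t * ln m)"
  proof -
    have d: "M - m \<noteq> 0" using assms by simp
    have 1: "1 - (x-m)/(M-m) = (M-x)/(M-m)" using d by (simp add: field_simps)
    show ?thesis unfolding 1 using d by (simp add: divide_simps) (simp add: algebra_simps)
  qed
  finally show ?thesis .
qed

lemma ineq_i:
  fixes m M t x :: real
  assumes "0 < m" "m < M" "t < 0" "m \<le> x" "x \<le> M"
  shows "x powr t \<le> (M powr (x - m) * m powr (M - x)) powr (t / (M - m))"
proof -
  define l where "l = (x-m)/(M-m)"
  have l: "0 \<le> l" "l \<le> 1" using assms by (auto simp: l_def field_simps)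
  have x0: "x > 0" using assms by simp
  have "exp (l * ln M + (1-l) * ln m) \<le> l * exp (ln M) + (1-l) * exp (ln m)" by (rule exp_convex2[OF l])
  also have "\<dots> = l * M + (1-l) * m" using assms by simp
  also have "\<dots> = x"
  proof -
    have d: "M - m \<noteq> 0" using assms by simp
    have "l * M + (1-l) * m = m + l * (M - m)" by (simp add: algebra_simps)
    also have "l * (M - m) = x - m" using d by (simp add: l_def)
    finally show ?thesis by simp
  qed
  finally have "l * ln M + (1-l) * ln m \<le> ln x" using x0 by (metis exp_le_cancel_iff exp_ln)
  hence "t * ln x \<le> t * (l * ln M + (1-l) * ln m)" using assms(3) by (simp add: mult_left_mono_neg)
  hence "exp (t * ln x) \<le> exp (l * (t * ln M) + (1-l) * (t * ln m))" by (simp add: algebra_simps)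
  moreover have "x powr t = exp (t * ln x)" using x0 by (simp add: powr_def)
  ultimately show ?thesis by (simp only: g_exp[OF assms(1,2)] l_def)
qed

lemma ineq_ii:
  fixes m M t x :: real
  assumes "0 < m" "m < M" "m \<le> x" "x \<le> M"
  shows "(M powr (x - m) * m powr (M - x)) powr (t / (M - m)) \<le>
         (M powr t - m powr t) / (M - m) * x + (M * m powr t - m * M powr t) / (M - m)"
proof -
  define l where "l = (x-m)/(M-m)"
  have l: "0 \<le> l" "l \<le> 1" using assms by (auto simp: l_def field_simps)
  have "(M powr (x - m) * m powr (M - x)) powr (t / (M - m)) = exp (l * (t * ln M) + (1-l) * (t * ln m))"
    by (simp add: g_exp[OF assms(1,2)] l_def)
  also have "\<dots> \<le> l * exp (t * ln M) + (1-l) * exp (t * ln m)" by (rule exp_convex2[OF l])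
  also have "\<dots> = l * M powr t + (1-l) * m powr t" using assms by (simp add: powr_def mult.commute)
  also have "\<dots> = (M powr t - m powr t) / (M - m) * x + (M * m powr t - m * M powr t) / (M - m)"
    using assms by (simp add: l_def field_simps)
  finally show ?thesis .
qed

lemma bernoulli_neg:
  fixes u t :: real
  assumes "0 < u" "t < 0"
  shows "1 + t * (u - 1) \<le> u powr t"
proof -
  have "t * (u - 1) \<le> t * ln u" using ln_le_minus_one[OF assms(1)] assms(2) by (simp add: mult_left_mono_neg)
  also have "1 + t * ln u \<le> exp (t * ln u)" by (rule exp_ge_add_one_self)
  finally show ?thesis using assms by (simp add: powr_def)
qed

lemma Kconst_facts:
  fixes m M t :: real
  assumes m: "0 < m" and mM: "m < M" and t: "t < 0"
  defines "K \<equiv> (m * M powr t - M * m powr t) / ((t - 1) * (M - m)) *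
     ((t - 1) / t * ((M powr t - m powr t) / (m * M powr t - M * m powr t))) powr t"
  shows "0 < K"
    and "\<And>x. 0 < x \<Longrightarrow> (M powr t - m powr t) / (M - m) * x + (M * m powr t - m * M powr t) / (M - m) \<le> K * x powr t"
proof -
  define a where "a = m powr t"
  define b where "b = M powr t"
  have ab: "0 < b" "b < a" using m mM t by (auto simp: a_def b_def powr_less_mono2_neg)
  have a0: "a > 0" using ab by simp
  define \<alpha> where "\<alpha> = (b - a) / (M - m)"
  define \<beta> where "\<beta> = (M * a - m * b) / (M - m)"
  have al: "\<alpha> < 0" using ab mM by (simp add: \<alpha>_def divide_neg_pos)
  have Ma: "M * a > m * b" using ab mM m by (intro mult_strict_mono) auto
  have be: "\<beta> > 0" using Ma mM by (simp add: \<beta>_def)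
  define xs where "xs = t * \<beta> / (\<alpha> * (1 - t))"
  have xs: "xs > 0" using t al be unfolding xs_def
    by (intro divide_neg_neg mult_neg_pos mult_neg_pos) auto
  have inner: "(t - 1) / t * ((b - a) / (m * b - M * a)) = 1 / xs"
  proof -
    have n: "t \<noteq> 0" "m * b - M * a \<noteq> 0" "1 - t \<noteq> 0" "M - m \<noteq> 0" "b - a \<noteq> 0" "M * a - m * b \<noteq> 0"
      using t mM Ma ab by auto
    have "1 / xs = \<alpha> * (1 - t) / (t * \<beta>)" by (simp add: xs_def)
    also have "\<alpha> * (1 - t) / (t * \<beta>) = (1 - t) / t * (\<alpha> / \<beta>)" by simp
    also have "\<alpha> / \<beta> = (b - a) / (M * a - m * b)" using n by (simp add: \<alpha>_def \<beta>_def)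
    also have "(b - a) / (M * a - m * b) = - ((b - a) / (m * b - M * a))"
    proof -
      have "M * a - m * b = - (m * b - M * a)" by simp
      thus ?thesis by (simp only: divide_minus_right)
    qed
    also have "(1 - t) / t = - ((t - 1) / t)"
    proof -
      have "1 - t = - (t - 1)" by simp
      thus ?thesis by (simp only: divide_minus_left)
    qed
    finally show ?thesis by simp
  qed
  have first: "(m * b - M * a) / ((t - 1) * (M - m)) = \<beta> / (1 - t)"
  proof -
    have "(m * b - M * a) / ((t - 1) * (M - m)) = (- (M * a - m * b)) / (- ((1 - t) * (M - m)))"
      by (simp add: algebra_simps)
    also have "\<dots> = (M * a - m * b) / ((1 - t) * (M - m))" by (rule minus_divide_divide)
    also have "\<dots> = \<beta> / (1 - t)" by (simp add: \<beta>_def mult.commute)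
    finally show ?thesis .
  qed
  have Keq: "K = \<beta> / (1 - t) * xs powr (- t)"
  proof -
    have "K = (m * b - M * a) / ((t - 1) * (M - m)) * ((t - 1) / t * ((b - a) / (m * b - M * a))) powr t"
      by (simp only: K_def a_def b_def)
    also have "\<dots> = \<beta> / (1 - t) * (1 / xs) powr t" by (simp only: inner first)
    also have "(1 / xs) powr t = xs powr (- t)" using xs by (simp add: powr_divide powr_minus_divide)
    finally show ?thesis .
  qed
  show "0 < K" unfolding Keq using be t xs by simp
  fix x :: real assume x: "0 < x"
  have "K * x powr t = \<beta> / (1 - t) * (x / xs) powr t"
  proof -
    have "xs powr (- t) * x powr t = (x / xs) powr t"
      using x xs by (simp add: powr_divide powr_minus_divide)
    thus ?thesis unfolding Keq by (simp add: mult.assoc)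
  qed
  also have "\<dots> \<ge> \<beta> / (1 - t) * (1 + t * (x / xs - 1))"
    using bernoulli_neg[of "x / xs" t] x xs t be by (intro mult_left_mono) auto
  finally have F1: "\<beta> / (1 - t) * (1 + t * (x / xs - 1)) \<le> K * x powr t" .
  have F2: "\<beta> / (1 - t) * (1 + t * (x / xs - 1)) = \<alpha> * x + \<beta>"
  proof -
    have n: "t \<noteq> 0" "1 - t \<noteq> 0" "\<beta> \<noteq> 0" "\<alpha> \<noteq> 0" using t al be by auto
    have tx: "t / xs = \<alpha> * (1 - t) / \<beta>" using n by (simp add: xs_def)
    have e1: "1 + t * (x / xs - 1) = (1 - t) + x * (t / xs)" by (simp add: algebra_simps)
    have "\<beta> / (1 - t) * ((1 - t) + x * (\<alpha> * (1 - t) / \<beta>)) = \<beta> + \<alpha> * x"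
      using n by (simp add: distrib_left)
    thus ?thesis unfolding e1 tx by simp
  qed
  have F3: "(M powr t - m powr t) / (M - m) = \<alpha>" by (simp only: \<alpha>_def a_def b_def)
  have F4: "(M * m powr t - m * M powr t) / (M - m) = \<beta>" by (simp only: \<beta>_def a_def b_def)
  show "(M powr t - m powr t) / (M - m) * x + (M * m powr t - m * M powr t) / (M - m) \<le> K * x powr t"
    unfolding F3 F4 using F1 F2 by linarith
qed

lemma spec_bound:
  fixes X :: "'a::complex_hilbert \<Rightarrow>\<^sub>L 'a"
  assumes X: "X \<in> bops" and lo: "op_le (m *\<^sub>R id_blinfun) X" and hi: "op_le X (M *\<^sub>R id_blinfun)"
  shows "self_adjoint X" "real_spectrum X \<subseteq> {m..M}"
proof -
  have "self_adjoint (X - m *\<^sub>R id_blinfun)"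
    using lo by (intro op_pos_sa bops_diff bops_scaleR bops_id X) (simp add: op_le_def)
  hence "self_adjoint (X - m *\<^sub>R id_blinfun + m *\<^sub>R id_blinfun)" by (intro sa_add sa_scaleR sa_id)
  thus sa: "self_adjoint X" by simp
  have qlo: "m * (norm x)^2 \<le> Re (cinner x (X x))" for x
    using lo unfolding op_le_iff by (auto simp: app_simps cinner_scaleR_right Re_cinner_self)
  have qhi: "Re (cinner x (X x)) \<le> M * (norm x)^2" for x
    using hi unfolding op_le_iff by (auto simp: app_simps cinner_scaleR_right Re_cinner_self)
  show "real_spectrum X \<subseteq> {m..M}"
  proof
    fix r assume r: "r \<in> real_spectrum X"
    show "r \<in> {m..M}"
    proof (rule ccontr)
      assume "r \<notin> {m..M}"
      hence "r < m \<or> M < r" by auto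
      hence "bij (blinfun_apply (X - r *\<^sub>R id_blinfun))"
      proof
        assume rm: "r < m"
        show ?thesis
        proof (rule coercive_bij)
          show "self_adjoint (X - r *\<^sub>R id_blinfun)" by (intro sa_diff sa_scaleR sa_id sa)
          show "0 < m - r" using rm by simp
          fix x
          show "(m - r) * (norm x)^2 \<le> Re (cinner x ((X - r *\<^sub>R id_blinfun) x))"
            using qlo[of x] by (simp add: app_simps cinner_diff_right cinner_scaleR_right Re_cinner_self
                left_diff_distrib)
        qed
      next
        assume rM: "M < r"
        have "bij (blinfun_apply (r *\<^sub>R id_blinfun - X))"
        proof (rule coercive_bij)
          show "self_adjoint (r *\<^sub>R id_blinfun - X)" by (intro sa_diff sa_scaleR sa_id sa)
          show "0 < r - M" using rM by simp
          fix x
          show "(r - M) * (norm x)^2 \<le> Re (cinner x ((r *\<^sub>R id_blinfun - X) x))"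
            using qhi[of x] by (simp add: app_simps cinner_diff_right cinner_scaleR_right Re_cinner_self
                left_diff_distrib)
        qed
        moreover have "blinfun_apply (X - r *\<^sub>R id_blinfun) = uminus \<circ> blinfun_apply (r *\<^sub>R id_blinfun - X)"
          by (rule ext) (simp add: app_simps)
        ultimately show ?thesis using bij_comp[OF _ bij_uminus] by metis
      qed
      thus False using r by (simp add: real_spectrum_def)
    qed
  qed
qed

lemma op_scaleC_real: "op_scaleC (complex_of_real r) X = r *\<^sub>R X"
proof -
  have "(\<lambda>x. scaleC (complex_of_real r) (X x)) = blinfun_apply (r *\<^sub>R X)"
    by (rule ext) (simp add: scaleC_of_real app_simps)
  thus ?thesis unfolding op_scaleC_def by (simp add: blinfun_apply_inverse)
qed

locale pulm =
  fixes \<phi> :: "('a::complex_hilbert \<Rightarrow>\<^sub>L 'a) \<Rightarrow> ('b::complex_hilbert \<Rightarrow>\<^sub>L 'b)"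
  assumes pulm: "positive_unital_linear_map \<phi>"
begin

lemma bops: "X \<in> bops \<Longrightarrow> \<phi> X \<in> bops"
  using pulm by (simp add: positive_unital_linear_map_def)

lemma add: "X \<in> bops \<Longrightarrow> Y \<in> bops \<Longrightarrow> \<phi> (X + Y) = \<phi> X + \<phi> Y"
  using pulm by (simp add: positive_unital_linear_map_def)

lemma scale: "X \<in> bops \<Longrightarrow> \<phi> (r *\<^sub>R X) = r *\<^sub>R \<phi> X"
  using pulm unfolding positive_unital_linear_map_def by (metis op_scaleC_real)

lemma unit: "\<phi> id_blinfun = id_blinfun"
  using pulm by (simp add: positive_unital_linear_map_def)

lemma pos: "X \<in> bops \<Longrightarrow> op_pos X \<Longrightarrow> op_pos (\<phi> X)"
  using pulm by (simp add: positive_unital_linear_map_def)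

lemma mono: assumes "U \<in> bops" "V \<in> bops" "op_le U V" shows "op_le (\<phi> U) (\<phi> V)"
proof -
  have "\<phi> V = \<phi> (U + (V - U))" by simp
  also have "\<dots> = \<phi> U + \<phi> (V - U)" using assms by (intro add bops_diff)
  finally have "\<phi> V - \<phi> U = \<phi> (V - U)" by simp
  moreover have "op_pos (\<phi> (V - U))" using assms by (intro pos bops_diff) (simp_all add: op_le_def)
  ultimately show ?thesis by (simp add: op_le_def)
qed

lemma linear_comb: "X \<in> bops \<Longrightarrow> \<phi> (b *\<^sub>R id_blinfun + a *\<^sub>R X) = b *\<^sub>R id_blinfun + a *\<^sub>R \<phi> X"
  by (simp add: add bops_scaleR bops_id scale unit)

end

lemma ulim_exists:
  fixes X :: "'a::complex_hilbert \<Rightarrow>\<^sub>L 'a"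
  assumes "real_spectrum X \<subseteq> {m..M}" "continuous_on {m..M} h"
  shows "\<exists>p. ulim (real_spectrum X) p h"
  using weier[OF compact_Icc assms(2)] uniform_limit_on_subset assms(1) by blast

lemma calc_facts:
  fixes X :: "'a::complex_hilbert \<Rightarrow>\<^sub>L 'a" and m M t :: real
  assumes X: "X \<in> bops" "self_adjoint X" "real_spectrum X \<subseteq> {m..M}"
    and m: "0 < m" and mM: "m < M" and t: "t < 0"
  defines "f \<equiv> \<lambda>x::real. x powr t"
    and "g \<equiv> \<lambda>x::real. (M powr (x - m) * m powr (M - x)) powr (t / (M - m))"
    and "\<alpha> \<equiv> (M powr t - m powr t) / (M - m)"
    and "\<beta> \<equiv> (M * m powr t - m * M powr t) / (M - m)"
  shows "op_le (opfun f X) (opfun g X)"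
    and "op_le (opfun g X) (\<beta> *\<^sub>R id_blinfun + \<alpha> *\<^sub>R X)"
    and "op_le (\<beta> *\<^sub>R id_blinfun + \<alpha> *\<^sub>R X) (Kconst m M t *\<^sub>R opfun f X)"
    and "opfun f X \<in> bops" "opfun g X \<in> bops"
proof -
  have cf: "continuous_on {m..M} f" unfolding f_def using m by (intro continuous_intros) auto
  have cg: "continuous_on {m..M} g" unfolding g_def using m mM by (intro continuous_intros) auto
  have cKf: "continuous_on {m..M} (\<lambda>x. Kconst m M t * f x)" by (intro continuous_intros cf)
  obtain pf where pf: "ulim (real_spectrum X) pf f" using ulim_exists[OF X(3) cf] by blast
  obtain pg where pg: "ulim (real_spectrum X) pg g" using ulim_exists[OF X(3) cg] by blast
  obtain pK where pK: "ulim (real_spectrum X) pK (\<lambda>x. Kconst m M t * f x)" using ulim_exists[OF X(3) cKf] by blast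
  define L where "L = [:\<beta>, \<alpha>:]"
  have pL: "ulim (real_spectrum X) (\<lambda>n. L) (poly L)" by (rule uniform_limitI) simp
  have opL: "opfun (poly L) X = \<beta> *\<^sub>R id_blinfun + \<alpha> *\<^sub>R X"
    by (simp add: opfun_poly[OF X(2)] L_def op_poly_linear)
  have polyL: "poly L x = \<alpha> * x + \<beta>" for x by (simp add: L_def)
  have inS: "\<mu> \<in> real_spectrum X \<Longrightarrow> m \<le> \<mu> \<and> \<mu> \<le> M" for \<mu> using X(3) by auto
  show "op_le (opfun f X) (opfun g X)"
    by (rule opfun_mono[OF X(2) pf pg]) (use inS m mM t in \<open>auto simp: f_def g_def intro: ineq_i\<close>)
  have "op_le (opfun g X) (opfun (poly L) X)"
  proof (rule opfun_mono[OF X(2) pg pL])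
    fix \<mu> assume "\<mu> \<in> real_spectrum X"
    hence mu: "m \<le> \<mu>" "\<mu> \<le> M" using inS by auto
    show "g \<mu> \<le> poly L \<mu>" unfolding g_def polyL \<alpha>_def \<beta>_def by (rule ineq_ii[OF m mM mu])
  qed
  thus "op_le (opfun g X) (\<beta> *\<^sub>R id_blinfun + \<alpha> *\<^sub>R X)" by (simp add: opL)
  have "op_le (opfun (poly L) X) (opfun (\<lambda>x. Kconst m M t * f x) X)"
  proof (rule opfun_mono[OF X(2) pL pK])
    fix \<mu> assume "\<mu> \<in> real_spectrum X"
    hence mu: "0 < \<mu>" using inS m by force
    show "poly L \<mu> \<le> Kconst m M t * f \<mu>"
      unfolding polyL f_def \<alpha>_def \<beta>_def Kconst_def using Kconst_facts(2)[OF m mM t mu] by simp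
  qed
  moreover have "opfun (\<lambda>x. Kconst m M t * f x) X = Kconst m M t *\<^sub>R opfun f X"
    by (rule opfun_scale[OF X(2) pf])
  ultimately show "op_le (\<beta> *\<^sub>R id_blinfun + \<alpha> *\<^sub>R X) (Kconst m M t *\<^sub>R opfun f X)" by (simp add: opL)
  show "opfun f X \<in> bops" by (rule opfun_bops[OF X(2,1) pf])
  show "opfun g X \<in> bops" by (rule opfun_bops[OF X(2,1) pg])
qed

lemma Kconst_pos: "0 < m \<Longrightarrow> m < M \<Longrightarrow> t < 0 \<Longrightarrow> 0 < Kconst m M t"
  unfolding Kconst_def by (rule Kconst_facts(1))

theorem corollary2p1:
  fixes A :: "'a::complex_hilbert \<Rightarrow>\<^sub>L 'a"
    and \<phi> :: "('a \<Rightarrow>\<^sub>L 'a) \<Rightarrow> ('b::complex_hilbert \<Rightarrow>\<^sub>L 'b)"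
    and m M t :: real
  assumes "0 < m" and "m < M"
    and "A \<in> bops"
    and "op_le (m *\<^sub>R id_blinfun) A" and "op_le A (M *\<^sub>R id_blinfun)"
    and "positive_unital_linear_map \<phi>"
    and "t < 0"
  shows "op_le ((1 / Kconst m M t) *\<^sub>R \<phi> (opfun (\<lambda>x. x powr t) A))
               ((1 / Kconst m M t) *\<^sub>R \<phi> (opfun (\<lambda>x. (M powr (x - m) * m powr (M - x)) powr (t / (M - m))) A))
       \<and> op_le ((1 / Kconst m M t) *\<^sub>R \<phi> (opfun (\<lambda>x. (M powr (x - m) * m powr (M - x)) powr (t / (M - m))) A))
               (opfun (\<lambda>x. x powr t) (\<phi> A))
       \<and> op_le (opfun (\<lambda>x. x powr t) (\<phi> A))
               (opfun (\<lambda>x. (M powr (x - m) * m powr (M - x)) powr (t / (M - m))) (\<phi> A))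
       \<and> op_le (opfun (\<lambda>x. (M powr (x - m) * m powr (M - x)) powr (t / (M - m))) (\<phi> A))
               (Kconst m M t *\<^sub>R \<phi> (opfun (\<lambda>x. x powr t) A))"
proof -
  note m = assms(1) and mM = assms(2) and A = assms(3) and lo = assms(4) and hi = assms(5)
    and t = assms(7)
  interpret pulm \<phi> by unfold_locales (rule assms(6))
  define f where "f = (\<lambda>x::real. x powr t)"
  define g where "g = (\<lambda>x::real. (M powr (x - m) * m powr (M - x)) powr (t / (M - m)))"
  define \<alpha> where "\<alpha> = (M powr t - m powr t) / (M - m)"
  define \<beta> where "\<beta> = (M * m powr t - m * M powr t) / (M - m)"
  define K where "K = Kconst m M t"
  have K: "K > 0" unfolding K_def by (rule Kconst_pos[OF m mM t])
  have saA: "self_adjoint A" and specA: "real_spectrum A \<subseteq> {m..M}" using spec_bound[OF A lo hi] by auto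
  have PA: "\<phi> A \<in> bops" by (rule bops[OF A])
  have "op_le (\<phi> (m *\<^sub>R id_blinfun)) (\<phi> A)" by (rule mono[OF bops_scaleR[OF bops_id] A lo])
  hence loP: "op_le (m *\<^sub>R id_blinfun) (\<phi> A)" by (simp add: scale bops_id unit)
  have "op_le (\<phi> A) (\<phi> (M *\<^sub>R id_blinfun))" by (rule mono[OF A bops_scaleR[OF bops_id] hi])
  hence hiP: "op_le (\<phi> A) (M *\<^sub>R id_blinfun)" by (simp add: scale bops_id unit)
  have saP: "self_adjoint (\<phi> A)" and specP: "real_spectrum (\<phi> A) \<subseteq> {m..M}"
    using spec_bound[OF PA loP hiP] by auto
  note CA = calc_facts[OF A saA specA m mM t, folded f_def g_def \<alpha>_def \<beta>_def K_def]
  note CP = calc_facts[OF PA saP specP m mM t, folded f_def g_def \<alpha>_def \<beta>_def K_def]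
  have lin: "\<phi> (\<beta> *\<^sub>R id_blinfun + \<alpha> *\<^sub>R A) = \<beta> *\<^sub>R id_blinfun + \<alpha> *\<^sub>R \<phi> A"
    by (rule linear_comb[OF A])
  have linb: "\<beta> *\<^sub>R id_blinfun + \<alpha> *\<^sub>R A \<in> bops" by (intro bops_add bops_scaleR bops_id A)
  have s1: "op_le ((1 / K) *\<^sub>R \<phi> (opfun f A)) ((1 / K) *\<^sub>R \<phi> (opfun g A))"
    using K by (intro op_le_scaleR mono CA) auto
  have "op_le (\<phi> (opfun g A)) (\<phi> (\<beta> *\<^sub>R id_blinfun + \<alpha> *\<^sub>R A))"
    by (intro mono CA linb)
  hence "op_le (\<phi> (opfun g A)) (K *\<^sub>R opfun f (\<phi> A))"
    unfolding lin using CP(3) op_le_trans by blast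
  hence "op_le ((1 / K) *\<^sub>R \<phi> (opfun g A)) ((1 / K) *\<^sub>R (K *\<^sub>R opfun f (\<phi> A)))"
    using K by (intro op_le_scaleR) auto
  hence s2: "op_le ((1 / K) *\<^sub>R \<phi> (opfun g A)) (opfun f (\<phi> A))" using K by simp
  have s3: "op_le (opfun f (\<phi> A)) (opfun g (\<phi> A))" by (rule CP(1))
  have "op_le (\<phi> (\<beta> *\<^sub>R id_blinfun + \<alpha> *\<^sub>R A)) (\<phi> (K *\<^sub>R opfun f A))"
    by (intro mono CA linb bops_scaleR)
  hence "op_le (\<beta> *\<^sub>R id_blinfun + \<alpha> *\<^sub>R \<phi> A) (K *\<^sub>R \<phi> (opfun f A))"
    unfolding lin using scale CA(4) by simp
  hence s4: "op_le (opfun g (\<phi> A)) (K *\<^sub>R \<phi> (opfun f A))" using CP(2) op_le_trans by blast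
  show ?thesis using s1 s2 s3 s4 unfolding f_def g_def K_def by blast
qed

end
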